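(* Consider the multi-component Curie–Weiss Ising model described in the context, with $\mathbf K$ positive definite and $\beta=\beta_{cr}$. For each $n$ let $\sigma$ be distributed according to the Gibbs measure $\mu_n$, let $\bm U_n:=\bm U_n(\sigma)$, and let $\bm Y_n\sim\mathcal N(0,\mathbf C_n^{-1})$ be independent of $\sigma$. Then $\bm U_n+\bm Y_n$ converges in distribution, as $n\to\infty$, to the probability measure on $\mathbb R^m$ with density \[ f(\bm x)=\frac1{\tilde Z}\exp\Big(-\frac12\sum_{i=1}^{m-1}(\lambda_i-\lambda_i^2)x_i^2-\frac{x_m^4}{12}\sum_{i=1}^m\frac{(V_{im})^4}{p_i}\Big), \] where $\tilde Z$ is a normalizing constant.
   Context: Fix an integer $m\ge 1$, proportions $p_1,\dots,p_m>0$ with $\sum_i p_i=1$, and a symmetric matrix $\mathbf K=(k_{ij})$ with all $k_{ij}>0$. The parameter $n$ ranges over positive integers with $np_i\in\mathbb N$ for all $i$. The vertex set $V=\{1,\dots,n\}$ is partitioned into blocks $G_1,\dots,G_m$ with $|G_i|=np_i$; for $v\in G_i,w\in G_j$ put $K(v,w)=k_{ij}/n$. On $\Omega=\{-1,+1\}^V$ the Gibbs measure at inverse temperature $\beta$ is $\mu_n(\sigma)\propto\exp\big(\beta\sum_{\{v,w\},v\ne w}K(v,w)\sigma(v)\sigma(w)\big)$. Block magnetizations: $M^{(i)}(\sigma)=\sum_{v\in G_i}\sigma(v)$, $\bm M(\sigma)=(M^{(1)}(\sigma),\dots,M^{(m)}(\sigma))^\top$. Let $\mathbf B=(p_ik_{ij})$,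 $\mathbf a>0$ its left Perron eigenvector with $\|\mathbf a\|_1=1$, and $\beta_{cr}=(\sum_{i,j}a_ip_ik_{ij})^{-1}$. Let $\mathbf D=\mathrm{diag}(\sqrt{p_1},\dots,\sqrt{p_m})$. At $\beta=\beta_{cr}$ the symmetric positive definite matrix $\beta\mathbf D\mathbf K\mathbf D$ has largest eigenvalue $1$, and we write $\beta\mathbf D\mathbf K\mathbf D=\mathbf V\,\mathrm{diag}(\lambda_1,\dots,\lambda_{m-1},1)\mathbf V^\top$ with $\mathbf V=(V_{ij})$ orthogonal and $0<\lambda_1\le\dots\le\lambda_{m-1}<1$. Define $\mathbf\Gamma_n=\mathrm{diag}(n^{-1/2},\dots,n^{-1/2},n^{-3/4})$, $\mathbf C_n=\mathrm{diag}(\lambda_1,\dots,\lambda_{m-1},n^{1/2})$ and $\bm U_n(\sigma)=\mathbf\Gamma_n\mathbf V^\top\mathbf D^{-1}\bm M(\sigma)$. *)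

theory Defs
  imports "HOL-Probability.Probability"
begin

text \<open>Conventions: block indices and coordinates of R^m are 0-based, i.e. block i of the
paper is index i-1 here; the distinguished last coordinate m of the paper is index m-1.
Vectors in R^m are extensional functions nat => real on {..<m}, with measure space
Rm m = PiM {..<m} (lborel).  Vertices are 0..n-1; G n v is the block of vertex v.\<close>

definition Rm :: "nat \<Rightarrow> (nat \<Rightarrow> real) measure" where
  "Rm m = PiM {..<m} (\<lambda>_. lborel)"

definition admissible_sizes :: "nat \<Rightarrow> (nat \<Rightarrow> real) \<Rightarrow> nat set" where
  "admissible_sizes m p = {n. n > 0 \<and> (\<forall>i<m. real n * p i \<in> \<nat>)}"

text \<open>Critical inverse temperature, given the left Perron eigenvector a of B = (p_i k_ij).\<close>
definition beta_cr :: "nat \<Rightarrow> (nat \<Rightarrow> real) \<Rightarrow> (nat \<Rightarrow> nat \<Rightarrow> real) \<Rightarrow> (nat \<Rightarrow> real) \<Rightarrow> real" where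
  "beta_cr m p k a = 1 / (\<Sum>i<m. \<Sum>j<m. a i * p i * k i j)"

definition config_set :: "nat \<Rightarrow> (nat \<Rightarrow> real) set" where
  "config_set n = PiE {..<n} (\<lambda>_. {-1, 1})"

definition interaction :: "nat \<Rightarrow> (nat \<Rightarrow> nat) \<Rightarrow> (nat \<Rightarrow> nat \<Rightarrow> real) \<Rightarrow> (nat \<Rightarrow> real) \<Rightarrow> real" where
  "interaction n g k \<sigma> = (\<Sum>v<n. \<Sum>w<v. (k (g v) (g w) / real n) * \<sigma> v * \<sigma> w)"

definition gibbs_measure :: "nat \<Rightarrow> (nat \<Rightarrow> nat) \<Rightarrow> (nat \<Rightarrow> nat \<Rightarrow> real) \<Rightarrow> real \<Rightarrow> (nat \<Rightarrow> real) measure" where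
  "gibbs_measure n g k \<beta> =
     density (count_space (config_set n))
       (\<lambda>\<sigma>. ennreal (exp (\<beta> * interaction n g k \<sigma>) /
                     (\<Sum>\<tau>\<in>config_set n. exp (\<beta> * interaction n g k \<tau>))))"

definition block_mag :: "nat \<Rightarrow> (nat \<Rightarrow> nat) \<Rightarrow> (nat \<Rightarrow> real) \<Rightarrow> nat \<Rightarrow> real" where
  "block_mag n g \<sigma> i = (\<Sum>v\<in>{v. v < n \<and> g v = i}. \<sigma> v)"

text \<open>U_n(sigma) = Gamma_n V^T D^{-1} M(sigma).\<close>
definition U_vec :: "nat \<Rightarrow> nat \<Rightarrow> (nat \<Rightarrow> real) \<Rightarrow> (nat \<Rightarrow> nat \<Rightarrow> real) \<Rightarrow> (nat \<Rightarrow> nat)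
     \<Rightarrow> (nat \<Rightarrow> real) \<Rightarrow> (nat \<Rightarrow> real)" where
  "U_vec m n p V g \<sigma> =
     (\<lambda>j\<in>{..<m}. (if j = m - 1 then real n powr (-3/4) else real n powr (-1/2)) *
                 (\<Sum>i<m. V i j * block_mag n g \<sigma> i / sqrt (p i)))"

definition Cn_diag :: "nat \<Rightarrow> (nat \<Rightarrow> real) \<Rightarrow> nat \<Rightarrow> nat \<Rightarrow> real" where
  "Cn_diag m lam n = (\<lambda>j. if j = m - 1 then sqrt (real n) else lam j)"

text \<open>Centered Gaussian on R^m with covariance diag(1/c_0,...,1/c_{m-1}) = C^{-1}
  (a Gaussian with diagonal covariance is the product of the univariate normals).\<close>
definition gaussian_diag :: "nat \<Rightarrow> (nat \<Rightarrow> real) \<Rightarrow> (nat \<Rightarrow> real) measure" where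
  "gaussian_diag m c = PiM {..<m} (\<lambda>i. density lborel (normal_density 0 (1 / sqrt (c i))))"

definition limit_density :: "nat \<Rightarrow> (nat \<Rightarrow> real) \<Rightarrow> (nat \<Rightarrow> real) \<Rightarrow> (nat \<Rightarrow> nat \<Rightarrow> real)
     \<Rightarrow> (nat \<Rightarrow> real) \<Rightarrow> real" where
  "limit_density m p lam V x =
     exp (- (1/2) * (\<Sum>i<m-1. (lam i - (lam i)^2) * (x i)^2)
          - (x (m-1))^4 / 12 * (\<Sum>i<m. (V i (m-1))^4 / p i))"

definition limit_measure :: "nat \<Rightarrow> (nat \<Rightarrow> real) \<Rightarrow> (nat \<Rightarrow> real) \<Rightarrow> (nat \<Rightarrow> nat \<Rightarrow> real)
     \<Rightarrow> (nat \<Rightarrow> real) measure" where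
  "limit_measure m p lam V =
     density (Rm m) (\<lambda>x. ennreal (limit_density m p lam V x /
                          (\<integral>y. limit_density m p lam V y \<partial>Rm m)))"

definition conv_in_distribution :: "nat filter \<Rightarrow> nat \<Rightarrow> (nat \<Rightarrow> (nat \<Rightarrow> real) measure)
     \<Rightarrow> (nat \<Rightarrow> real) measure \<Rightarrow> bool" where
  "conv_in_distribution F m \<mu> \<nu> \<longleftrightarrow>
     (\<forall>f :: (nat \<Rightarrow> real) \<Rightarrow> real.
        continuous_on (space (Rm m)) f \<and> bounded (f ` space (Rm m)) \<longrightarrow>
        ((\<lambda>n. \<integral>x. f x \<partial>\<mu> n) \<longlongrightarrow> (\<integral>x. f x \<partial>\<nu>)) F)"

end

theory Submission
  imports Defs "Jordan_Normal_Form.Determinant" "HOL-Real_Asymp.Real_Asymp"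
begin

lemma orth_cols:
  fixes V :: "nat \<Rightarrow> nat \<Rightarrow> real"
  assumes "\<forall>i<m. \<forall>j<m. (\<Sum>l<m. V i l * V j l) = (if i = j then 1 else 0)"
  shows "j < m \<Longrightarrow> k < m \<Longrightarrow> (\<Sum>i<m. V i j * V i k) = (if j = k then 1 else 0)"
proof -
  assume jk: "j < m" "k < m"
  define A where "A = mat m m (\<lambda>(i,j). V i j)"
  have A: "A \<in> carrier_mat m m" unfolding A_def by simp
  have At: "transpose_mat A \<in> carrier_mat m m" using A by simp
  have "A * transpose_mat A = 1\<^sub>m m"
  proof (rule eq_matI)
    fix i j assume ij: "i < dim_row (1\<^sub>m m)" "j < dim_col (1\<^sub>m m)"
    then have "(A * transpose_mat A) $$ (i, j) = (\<Sum>l<m. V i l * V j l)"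
      unfolding A_def by (simp add: scalar_prod_def lessThan_atLeast0)
    also have "\<dots> = 1\<^sub>m m $$ (i, j)" using assms ij by simp
    finally show "(A * transpose_mat A) $$ (i, j) = 1\<^sub>m m $$ (i, j)" .
  qed (auto simp: A_def)
  then have "transpose_mat A * A = 1\<^sub>m m" by (rule mat_mult_left_right_inverse[OF A At])
  then have "(transpose_mat A * A) $$ (j, k) = 1\<^sub>m m $$ (j, k)" by simp
  then show ?thesis using jk unfolding A_def by (simp add: scalar_prod_def lessThan_atLeast0)
qed

definition Gf :: "real \<Rightarrow> real" where "Gf t = t^2/2 - ln (cosh t)"

lemma tanh_le_self: fixes s :: real assumes "0 \<le> s" shows "tanh s \<le> s"
proof -
  have "(\<lambda>x. x - tanh x) 0 \<le> (\<lambda>x. x - tanh x) s"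
  proof (rule DERIV_nonneg_imp_nondecreasing[OF assms])
    fix x :: real
    show "\<exists>y. ((\<lambda>x. x - tanh x) has_real_derivative y) (at x) \<and> 0 \<le> y"
      by (rule exI[of _ "1 - (1 - tanh x ^ 2)"]) (auto intro!: derivative_eq_intros)
  qed
  then show ?thesis by simp
qed

lemma tanh_ge_cubic: fixes s :: real assumes "0 \<le> s" shows "s - s^3/3 \<le> tanh s"
proof -
  have "(\<lambda>x. tanh x - x + x^3/3) 0 \<le> (\<lambda>x. tanh x - x + x^3/3) s"
  proof (rule DERIV_nonneg_imp_nondecreasing[OF assms])
    fix x :: real assume x: "0 \<le> x"
    have "tanh x \<le> x" using tanh_le_self[OF x] .
    moreover have "0 \<le> tanh x" using x by simp
    ultimately have "tanh x ^ 2 \<le> x^2" by (simp add: power_mono)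
    then show "\<exists>y. ((\<lambda>x. tanh x - x + x^3/3) has_real_derivative y) (at x) \<and> 0 \<le> y"
      by (intro exI[of _ "(1 - tanh x ^ 2) - 1 + 3 * x^2/3"]) (auto intro!: derivative_eq_intros)
  qed
  then show ?thesis by simp
qed

lemma Gf_deriv: "(Gf has_real_derivative (x - tanh x)) (at x)"
proof -
  have "(Gf has_real_derivative (2 * x / 2 - sinh x / cosh x)) (at x)"
    unfolding Gf_def[abs_def]
    by (auto intro!: derivative_eq_intros simp: cosh_real_pos)
  then show ?thesis by (simp add: tanh_def)
qed

lemma Gf_0[simp]: "Gf 0 = 0" by (simp add: Gf_def)
lemma Gf_even: "Gf (- s) = Gf s" by (simp add: Gf_def)
lemma Gf_abs: "Gf \<bar>s\<bar> = Gf s" by (cases "s \<ge> 0") (auto simp: Gf_even)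

lemma Gf_mono: fixes a b :: real assumes "0 \<le> a" "a \<le> b" shows "Gf a \<le> Gf b"
proof (rule DERIV_nonneg_imp_nondecreasing[OF assms(2)])
  fix x assume "a \<le> x" "x \<le> b"
  then have "tanh x \<le> x" using assms by (intro tanh_le_self) auto
  then show "\<exists>y. (Gf has_real_derivative y) (at x) \<and> 0 \<le> y"
    by (intro exI[of _ "x - tanh x"]) (simp add: Gf_deriv)
qed

lemma Gf_nonneg: "0 \<le> Gf s"
  using Gf_mono[of 0 "\<bar>s\<bar>"] by (simp add: Gf_abs)

lemma Gf_small: fixes s :: real assumes "0 \<le> s" "s \<le> 1" shows "s^4/27 \<le> Gf s"
proof -
  have k: "4 * x^3/27 \<le> x - tanh x" if x: "0 \<le> x" "x \<le> 1" for x :: real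
  proof -
    have "(\<lambda>x. x - tanh x - 4 * x^3/27) 0 \<le> (\<lambda>x. x - tanh x - 4 * x^3/27) x"
    proof (rule DERIV_nonneg_imp_nondecreasing[OF x(1)])
      fix y :: real assume y: "0 \<le> y" "y \<le> x"
      have "y - y^3/3 \<le> tanh y" by (rule tanh_ge_cubic) fact
      moreover have "y^3 \<le> y"
      proof -
        have "y^2 \<le> 1" using y x by (simp add: power_le_one)
        then have "y * y^2 \<le> y * 1" using y by (intro mult_left_mono) auto
        then show ?thesis by (simp add: power3_eq_cube power2_eq_square mult.assoc)
      qed
      ultimately have "2*y/3 \<le> tanh y" by simp
      moreover have "0 \<le> 2*y/3" using y by simp
      ultimately have "(2*y/3)^2 \<le> tanh y ^ 2" using power_mono[of "2*y/3" "tanh y" 2] by simp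
      then have "0 \<le> 1 - (1 - tanh y ^ 2) - 4 * (3 * y^2) / 27"
        by (simp add: power2_eq_square)
      then show "\<exists>d. ((\<lambda>x. x - tanh x - 4 * x^3/27) has_real_derivative d) (at y) \<and> 0 \<le> d"
        by (intro exI[of _ "1 - (1 - tanh y ^ 2) - 4 * (3 * y^2) / 27"])
           (auto intro!: derivative_eq_intros)
    qed
    then show ?thesis by simp
  qed
  have "(\<lambda>x. Gf x - x^4/27) 0 \<le> (\<lambda>x. Gf x - x^4/27) s"
  proof (rule DERIV_nonneg_imp_nondecreasing[OF assms(1)])
    fix y :: real assume y: "0 \<le> y" "y \<le> s"
    then have "4 * y^3/27 \<le> y - tanh y" using assms by (intro k) auto
    then show "\<exists>d. ((\<lambda>x. Gf x - x^4/27) has_real_derivative d) (at y) \<and> 0 \<le> d"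
      by (intro exI[of _ "(y - tanh y) - 4 * y^3/27"])
         (auto intro!: derivative_eq_intros Gf_deriv)
  qed
  then show ?thesis by simp
qed

lemma tanh_le_1: "tanh (x::real) \<le> 1"
  using tanh_real_lt_1[of x] by simp

lemma Gf_large: fixes s :: real assumes "1 \<le> s" shows "s^2/108 \<le> Gf s"
proof -
  have "(\<lambda>x. Gf x - (x-1)^2/2) 1 \<le> (\<lambda>x. Gf x - (x-1)^2/2) s"
  proof (rule DERIV_nonneg_imp_nondecreasing[OF assms])
    fix y :: real
    have "0 \<le> (y - tanh y) - (y - 1)" using tanh_le_1[of y] by simp
    then show "\<exists>d. ((\<lambda>x. Gf x - (x-1)^2/2) has_real_derivative d) (at y) \<and> 0 \<le> d"
      by (intro exI[of _ "(y - tanh y) - (2 * (y - 1) / 2)"])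
         (auto intro!: derivative_eq_intros Gf_deriv)
  qed
  then have "Gf 1 + (s-1)^2/2 \<le> Gf s" by simp
  moreover have "1/27 \<le> Gf 1" using Gf_small[of 1] by simp
  moreover have "s^2/108 \<le> 1/27 + (s-1)^2/2"
  proof (cases "s \<le> 2")
    case True
    have "s * s \<le> 2 * 2" using True assms by (intro mult_mono) auto
    then have "s^2 \<le> 4" by (simp add: power2_eq_square)
    moreover have "0 \<le> (s-1)^2" by simp
    ultimately show ?thesis by linarith
  next
    case False
    have "s \<le> 2*(s-1)" using False by simp
    then have "s^2 \<le> (2*(s-1))^2" using assms by (intro power_mono) auto
    moreover have "(2*(s-1))^2 = 4*(s-1)^2" by (simp add: power2_eq_square algebra_simps)
    ultimately have "s^2 \<le> 4*(s-1)^2" by simp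
    moreover have "0 \<le> (s-1)^2" by simp
    ultimately show ?thesis by linarith
  qed
  ultimately show ?thesis by linarith
qed

lemma Gf_scaled:
  fixes y :: real and n :: nat assumes n: "n \<ge> 1"
  shows "(y^2 - 1)/108 \<le> real n * Gf (\<bar>y\<bar> * real n powr (-1/4))"
proof -
  define s where "s = \<bar>y\<bar> * real n powr (-1/4)"
  have s0: "0 \<le> s" unfolding s_def by simp
  have npos: "0 < real n" using n by simp
  have n4: "(real n powr (1/4)) ^ 4 = real n"
    using npos by (subst powr_power) auto
  have n2: "(real n powr (1/4)) ^ 2 = sqrt (real n)"
    using npos by (subst powr_power) (auto simp: powr_half_sqrt)
  have pp: "real n powr (-1/4) * real n powr (1/4) = real n powr (-1/4 + 1/4)"
    by (rule powr_add[symmetric])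
  have sn: "\<bar>y\<bar> = s * real n powr (1/4)"
    unfolding s_def using npos pp by (simp add: mult.assoc)
  have y4: "y^4 = real n * s^4"
  proof -
    have "\<bar>y\<bar>^4 = y^4" by (rule power_even_abs) simp
    then have "y^4 = \<bar>y\<bar>^4" by simp
    also have "\<dots> = s^4 * (real n powr (1/4)) ^ 4" by (simp only: sn power_mult_distrib)
    finally show ?thesis using n4 by simp
  qed
  have y2: "y^2 = sqrt (real n) * s^2"
  proof -
    have "y^2 = \<bar>y\<bar>^2" by simp
    also have "\<dots> = s^2 * (real n powr (1/4)) ^ 2" by (simp only: sn power_mult_distrib)
    finally show ?thesis using n2 by simp
  qed
  show ?thesis
  proof (cases "s \<le> 1")
    case True
    have "real n * (s^4/27) \<le> real n * Gf s" using Gf_small[OF s0 True] by (intro mult_left_mono) auto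
    then have a: "y^4/27 \<le> real n * Gf s" using y4 by simp
    have "(y^2 - 1/2)^2 = y^4 - y^2 + 1/4" by (simp add: power2_eq_square power4_eq_xxxx algebra_simps)
    moreover have "0 \<le> (y^2 - 1/2)^2" by simp
    ultimately have "y^2 - 1 \<le> y^4" by linarith
    moreover have "0 \<le> y^4" by simp
    ultimately have "27*(y^2-1) \<le> 108*y^4"
      by (smt (verit) mult_left_mono)
    then have "(y^2-1)/108 \<le> y^4/27" by (simp add: field_simps)
    with a show ?thesis unfolding s_def by linarith
  next
    case False
    have sq: "1 \<le> sqrt (real n)" using n by simp
    have "sqrt (real n) * 1 \<le> sqrt (real n) * sqrt (real n)" by (rule mult_left_mono[OF sq]) simp
    then have sqn: "sqrt (real n) \<le> real n" by simp
    have "y^2 = sqrt (real n) * s^2" by (fact y2)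
    also have "\<dots> \<le> real n * s^2" using sqn by (intro mult_right_mono) auto
    finally have "y^2/108 \<le> real n * (s^2/108)" by simp
    also have "\<dots> \<le> real n * Gf s" using Gf_large[of s] False by (intro mult_left_mono) auto
    finally show ?thesis unfolding s_def by simp
  qed
qed

lemma Gf_lim: "((\<lambda>t. Gf t / t^4) \<longlongrightarrow> 1/12) (at 0)"
proof -
  have "((\<lambda>t::real. (t^2/2 - ln ((exp t + exp (-t))/2))/t^4) \<longlongrightarrow> 1/12) (at 0)"
    by real_asymp
  moreover have "cosh t = (exp t + exp (-t))/2" for t :: real
    by (simp add: cosh_def)
  then have "(\<lambda>t. Gf t / t^4) = (\<lambda>t::real. (t^2/2 - ln ((exp t + exp (-t))/2))/t^4)"
    unfolding Gf_def by (simp only:)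
  ultimately show ?thesis by simp
qed


locale cw =
  fixes m :: nat and p :: "nat \<Rightarrow> real" and k :: "nat \<Rightarrow> nat \<Rightarrow> real"
    and a :: "nat \<Rightarrow> real" and V :: "nat \<Rightarrow> nat \<Rightarrow> real" and lam :: "nat \<Rightarrow> real"
    and G :: "nat \<Rightarrow> nat \<Rightarrow> nat"
  assumes m_pos: "m \<ge> 1"
    and p_pos: "\<forall>i<m. p i > 0" and p_sum: "(\<Sum>i<m. p i) = 1"
    and k_sym: "\<forall>i<m. \<forall>j<m. k i j = k j i"
    and V_orth: "\<forall>i<m. \<forall>j<m. (\<Sum>l<m. V i l * V j l) = (if i = j then 1 else 0)"
    and V_decomp: "\<forall>i<m. \<forall>j<m. beta_cr m p k a * (sqrt (p i) * k i j * sqrt (p j))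
                     = (\<Sum>l<m. V i l * (if l = m - 1 then 1 else lam l) * V j l)"
    and lam_bounds: "\<forall>l<m-1. 0 < lam l \<and> lam l < 1"
    and G_range: "\<forall>n\<in>admissible_sizes m p. \<forall>v<n. G n v < m"
    and G_card: "\<forall>n\<in>admissible_sizes m p. \<forall>i<m.
                   real (card {v. v < n \<and> G n v = i}) = real n * p i"
begin

abbreviation "bc \<equiv> beta_cr m p k a"
definition Lam :: "nat \<Rightarrow> real" where "Lam l = (if l = m - 1 then 1 else lam l)"
definition cc :: "nat \<Rightarrow> nat \<Rightarrow> real" where "cc n j = Cn_diag m lam n j"
definition gam :: "nat \<Rightarrow> nat \<Rightarrow> real" where
  "gam n j = (if j = m - 1 then real n powr (-3/4) else real n powr (-1/2))"
definition ee :: "nat \<Rightarrow> nat \<Rightarrow> real" where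
  "ee n j = (if j = m - 1 then real n powr (-1/4) else lam j * real n powr (-1/2))"
definition tt :: "nat \<Rightarrow> (nat \<Rightarrow> real) \<Rightarrow> nat \<Rightarrow> real" where
  "tt n x i = (\<Sum>j<m. ee n j * x j * V i j) / sqrt (p i)"
definition Zv :: "nat \<Rightarrow> (nat \<Rightarrow> real) \<Rightarrow> nat \<Rightarrow> real" where
  "Zv n s l = (\<Sum>i<m. V i l * block_mag n (G n) s i / sqrt (p i))"

lemma cc_pos: "n > 0 \<Longrightarrow> j < m \<Longrightarrow> cc n j > 0"
  using lam_bounds by (auto simp: cc_def Cn_diag_def)

lemma cc_gam: assumes "n > 0" shows "cc n j * gam n j = ee n j"
proof (cases "j = m - 1")
  case True
  have "sqrt (real n) * real n powr (-3/4) = real n powr (1/2) * real n powr (-3/4)"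
    using assms by (simp add: powr_half_sqrt)
  also have "\<dots> = real n powr (1/2 + -3/4)" by (rule powr_add[symmetric])
  finally show ?thesis using True by (simp add: cc_def gam_def ee_def Cn_diag_def)
qed (simp add: cc_def gam_def ee_def Cn_diag_def)

lemma cc_gam2: assumes "n > 0" shows "cc n j * (gam n j)^2 = Lam j / real n"
proof (cases "j = m - 1")
  case True
  have a: "(real n powr (-3/4))^2 = real n powr (-3/2)"
    using assms by (subst powr_power) auto
  have sq: "sqrt (real n) = real n powr (1/2)"
    using assms by (simp add: powr_half_sqrt)
  have b: "real n powr (1/2) * real n powr (-3/2) = real n powr (1/2 + -3/2)" by (rule powr_add[symmetric])
  have c: "real n powr (-1) = 1 / real n" using assms by (simp add: powr_minus_divide)
  have "cc n j * (gam n j)^2 = real n powr (1/2) * real n powr (-3/2)"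
    using True a sq by (simp add: cc_def gam_def Cn_diag_def)
  also have "\<dots> = 1 / real n" using b c by simp
  finally show ?thesis using True by (simp add: Lam_def)
next
  case False
  have "(real n powr (-1/2))^2 = real n powr (-1)"
    using assms by (subst powr_power) auto
  moreover have "real n powr (-1) = 1 / real n" using assms by (simp add: powr_minus_divide)
  ultimately show ?thesis using False by (simp add: cc_def gam_def Lam_def Cn_diag_def)
qed

lemma n_ee2: assumes "n > 0" shows "real n * (ee n j)^2 = cc n j * Lam j"
proof -
  have "real n * (ee n j)^2 = cc n j * (real n * (cc n j * (gam n j)^2))"
    by (simp add: cc_gam[OF assms, symmetric] power2_eq_square algebra_simps)
  also have "\<dots> = cc n j * Lam j" using assms by (simp add: cc_gam2)
  finally show ?thesis .
qed

lemma U_Zv: "j < m \<Longrightarrow> U_vec m n p V (G n) s j = gam n j * Zv n s j"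
  by (simp add: U_vec_def Zv_def gam_def)

lemma orth_cols': "j < m \<Longrightarrow> l < m \<Longrightarrow> (\<Sum>i<m. V i j * V i l) = (if j = l then 1 else 0)"
  using orth_cols[OF V_orth] by blast

lemma sum_sq_orth:
  fixes y :: "nat \<Rightarrow> real"
  shows "(\<Sum>i<m. (\<Sum>j<m. y j * V i j)^2) = (\<Sum>j<m. (y j)^2)"
proof -
  have sq: "(\<Sum>j<m. y j * V i j)^2 = (\<Sum>j<m. \<Sum>l<m. y j * y l * (V i j * V i l))" for i
  proof -
    have "(\<Sum>j<m. y j * V i j)^2 = (\<Sum>j<m. \<Sum>l<m. (y j * V i j) * (y l * V i l))"
      by (simp add: power2_eq_square sum_product)
    also have "\<dots> = (\<Sum>j<m. \<Sum>l<m. y j * y l * (V i j * V i l))"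
      by (intro sum.cong refl) (simp add: ac_simps)
    finally show ?thesis .
  qed
  have "(\<Sum>i<m. (\<Sum>j<m. y j * V i j)^2) = (\<Sum>i<m. \<Sum>j<m. \<Sum>l<m. y j * y l * (V i j * V i l))"
    by (simp only: sq)
  also have "\<dots> = (\<Sum>j<m. \<Sum>i<m. \<Sum>l<m. y j * y l * (V i j * V i l))"
    by (rule sum.swap)
  also have "\<dots> = (\<Sum>j<m. \<Sum>l<m. \<Sum>i<m. y j * y l * (V i j * V i l))"
    by (intro sum.cong refl sum.swap)
  also have "\<dots> = (\<Sum>j<m. \<Sum>l<m. y j * y l * (\<Sum>i<m. V i j * V i l))"
    by (simp only: sum_distrib_left)
  also have "\<dots> = (\<Sum>j<m. \<Sum>l<m. y j * y l * (if j = l then 1 else 0))"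
    by (intro sum.cong refl) (simp add: orth_cols')
  also have "\<dots> = (\<Sum>j<m. (y j)^2)"
    by (simp add: power2_eq_square if_distrib cong: if_cong)
  finally show ?thesis .
qed

lemma sum_p_tt2: "(\<Sum>i<m. p i * (tt n x i)^2) = (\<Sum>j<m. (ee n j * x j)^2)"
proof -
  have "(\<Sum>i<m. p i * (tt n x i)^2) = (\<Sum>i<m. (\<Sum>j<m. (ee n j * x j) * V i j)^2)"
  proof (intro sum.cong refl)
    fix i assume "i \<in> {..<m}"
    then have "p i > 0" using p_pos by simp
    then show "p i * (tt n x i)^2 = (\<Sum>j<m. (ee n j * x j) * V i j)^2"
      by (simp add: tt_def power_divide)
  qed
  also have "\<dots> = (\<Sum>j<m. (ee n j * x j)^2)" by (rule sum_sq_orth)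
  finally show ?thesis .
qed


lemma adm_pos: "n \<in> admissible_sizes m p \<Longrightarrow> n > 0"
  by (simp add: admissible_sizes_def)

lemma sum_group_G:
  assumes n: "n \<in> admissible_sizes m p"
  shows "(\<Sum>v<n. h v) = (\<Sum>i<m. \<Sum>v\<in>{v. v < n \<and> G n v = i}. h v)"
proof -
  have "(\<Sum>i<m. sum h {v \<in> {..<n}. G n v = i}) = sum h {..<n}"
    using G_range n by (intro sum.group) auto
  moreover have "{v \<in> {..<n}. G n v = i} = {v. v < n \<and> G n v = i}" for i by auto
  ultimately show ?thesis by simp
qed

lemma sum_vertices:
  assumes n: "n \<in> admissible_sizes m p"
  shows "(\<Sum>v<n. F (G n v)) = (\<Sum>i<m. real n * p i * F i)"
proof -
  have "(\<Sum>v<n. F (G n v)) = (\<Sum>i<m. \<Sum>v\<in>{v. v < n \<and> G n v = i}. F (G n v))"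
    by (rule sum_group_G[OF n])
  also have "\<dots> = (\<Sum>i<m. \<Sum>v\<in>{v. v < n \<and> G n v = i}. F i)"
    by (intro sum.cong refl) auto
  also have "\<dots> = (\<Sum>i<m. real (card {v. v < n \<and> G n v = i}) * F i)" by simp
  also have "\<dots> = (\<Sum>i<m. real n * p i * F i)" using G_card n by (intro sum.cong refl) auto
  finally show ?thesis .
qed

lemma sum_block:
  assumes n: "n \<in> admissible_sizes m p"
  shows "(\<Sum>v<n. F (G n v) * s v) = (\<Sum>i<m. F i * block_mag n (G n) s i)"
proof -
  have "(\<Sum>v<n. F (G n v) * s v) = (\<Sum>i<m. \<Sum>v\<in>{v. v < n \<and> G n v = i}. F (G n v) * s v)"
    by (rule sum_group_G[OF n])
  also have "\<dots> = (\<Sum>i<m. \<Sum>v\<in>{v. v < n \<and> G n v = i}. F i * s v)"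
    by (intro sum.cong refl) auto
  also have "\<dots> = (\<Sum>i<m. F i * block_mag n (G n) s i)"
    by (simp add: block_mag_def sum_distrib_left)
  finally show ?thesis .
qed

end

lemma sum_square_split:
  fixes A :: "nat \<Rightarrow> nat \<Rightarrow> real"
  shows "(\<And>v w. v < n \<Longrightarrow> w < n \<Longrightarrow> A v w = A w v) \<Longrightarrow>
    (\<Sum>v<n. \<Sum>w<n. A v w) = 2 * (\<Sum>v<n. \<Sum>w<v. A v w) + (\<Sum>v<n. A v v)"
proof (induction n)
  case 0 then show ?case by simp
next
  case (Suc n)
  have IH: "(\<Sum>v<n. \<Sum>w<n. A v w) = 2 * (\<Sum>v<n. \<Sum>w<v. A v w) + (\<Sum>v<n. A v v)"
    using Suc by auto
  have sym: "(\<Sum>v<n. A v n) = (\<Sum>v<n. A n v)" using Suc.prems by (intro sum.cong refl) auto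
  have "(\<Sum>v<Suc n. \<Sum>w<Suc n. A v w) = (\<Sum>v<n. \<Sum>w<n. A v w) + (\<Sum>v<n. A v n) + (\<Sum>w<n. A n w) + A n n"
    by (simp add: sum.distrib)
  also have "\<dots> = 2 * (\<Sum>v<Suc n. \<Sum>w<v. A v w) + (\<Sum>v<Suc n. A v v)"
    using IH sym by simp
  finally show ?case .
qed

lemma config_sum:
  fixes c :: "nat \<Rightarrow> real"
  shows "(\<Sum>s\<in>config_set n. exp (\<Sum>v<n. s v * c v)) = (\<Prod>v<n. exp (c v) + exp (- c v))"
proof -
  have "(\<Prod>v<n. exp (c v) + exp (- c v)) = (\<Prod>v<n. \<Sum>t\<in>{-1, 1::real}. exp (t * c v))"
    by (intro prod.cong refl) simp
  also have "\<dots> = (\<Sum>s\<in>PiE {..<n} (\<lambda>_. {-1, 1::real}). \<Prod>v<n. exp (s v * c v))"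
    by (rule prod_sum_PiE) auto
  also have "\<dots> = (\<Sum>s\<in>config_set n. exp (\<Sum>v<n. s v * c v))"
    by (simp add: config_set_def exp_sum)
  finally show ?thesis by simp
qed


context cw begin

lemma quad_form:
  fixes Mg :: "nat \<Rightarrow> real"
  shows "bc * (\<Sum>i<m. \<Sum>j<m. k i j * Mg i * Mg j) = (\<Sum>l<m. Lam l * (\<Sum>i<m. V i l * Mg i / sqrt (p i))^2)"
proof -
  define y where "y i = Mg i / sqrt (p i)" for i
  have My: "Mg i = sqrt (p i) * y i" if "i < m" for i
  proof -
    have "p i > 0" using p_pos that by simp
    then show ?thesis by (simp add: y_def)
  qed
  have "bc * (\<Sum>i<m. \<Sum>j<m. k i j * Mg i * Mg j) = (\<Sum>i<m. \<Sum>j<m. y i * y j * (bc * (sqrt (p i) * k i j * sqrt (p j))))"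
    by (simp add: sum_distrib_left My ac_simps)
  also have "\<dots> = (\<Sum>i<m. \<Sum>j<m. y i * y j * (\<Sum>l<m. V i l * Lam l * V j l))"
    using V_decomp by (intro sum.cong refl) (simp add: Lam_def)
  also have "\<dots> = (\<Sum>i<m. \<Sum>j<m. \<Sum>l<m. Lam l * ((y i * V i l) * (y j * V j l)))"
    by (simp add: sum_distrib_left ac_simps)
  also have "\<dots> = (\<Sum>i<m. \<Sum>l<m. \<Sum>j<m. Lam l * ((y i * V i l) * (y j * V j l)))"
    by (intro sum.cong refl sum.swap)
  also have "\<dots> = (\<Sum>l<m. \<Sum>i<m. \<Sum>j<m. Lam l * ((y i * V i l) * (y j * V j l)))"
    by (rule sum.swap)
  also have "\<dots> = (\<Sum>l<m. Lam l * (\<Sum>i<m. y i * V i l)^2)"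
  proof (intro sum.cong refl)
    fix l
    have "(\<Sum>i<m. y i * V i l)^2 = (\<Sum>i<m. \<Sum>j<m. (y i * V i l) * (y j * V j l))"
      by (simp add: power2_eq_square sum_product)
    then show "(\<Sum>i<m. \<Sum>j<m. Lam l * ((y i * V i l) * (y j * V j l))) = Lam l * (\<Sum>i<m. y i * V i l)^2"
      by (simp add: sum_distrib_left)
  qed
  also have "\<dots> = (\<Sum>l<m. Lam l * (\<Sum>i<m. V i l * Mg i / sqrt (p i))^2)"
    by (simp add: y_def ac_simps)
  finally show ?thesis .
qed

lemma interaction_eq:
  assumes n: "n \<in> admissible_sizes m p" and s: "s \<in> config_set n"
  shows "bc * interaction n (G n) k s = (1 / (2 * real n)) * (\<Sum>l<m. Lam l * (Zv n s l)^2)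
           - bc / (2 * real n) * (\<Sum>v<n. k (G n v) (G n v))"
proof -
  have npos: "real n > 0" using adm_pos[OF n] by simp
  define A where "A v w = k (G n v) (G n w) / real n * s v * s w" for v w
  have symA: "A v w = A w v" if "v < n" "w < n" for v w
    using k_sym G_range n that by (auto simp: A_def)
  have I: "interaction n (G n) k s = (\<Sum>v<n. \<Sum>w<v. A v w)" by (simp add: interaction_def A_def)
  have sq: "(\<Sum>v<n. \<Sum>w<n. A v w) = 2 * (\<Sum>v<n. \<Sum>w<v. A v w) + (\<Sum>v<n. A v v)"
    using symA by (rule sum_square_split)
  have s1: "s v * s v = 1" if "v < n" for v
    using s that by (auto simp: config_set_def PiE_def Pi_def)
  have diag: "(\<Sum>v<n. A v v) = (1 / real n) * (\<Sum>v<n. k (G n v) (G n v))"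
    by (simp add: A_def sum_distrib_left mult.assoc s1)
  define Mg where "Mg i = block_mag n (G n) s i" for i
  have inner: "(\<Sum>w<n. A v w) = s v / real n * (\<Sum>j<m. k (G n v) j * Mg j)" for v
  proof -
    have "(\<Sum>w<n. A v w) = s v / real n * (\<Sum>w<n. k (G n v) (G n w) * s w)"
      by (simp add: A_def sum_distrib_left ac_simps)
    also have "(\<Sum>w<n. k (G n v) (G n w) * s w) = (\<Sum>j<m. k (G n v) j * Mg j)"
      unfolding Mg_def by (rule sum_block[OF n])
    finally show ?thesis .
  qed
  have full: "(\<Sum>v<n. \<Sum>w<n. A v w) = (1 / real n) * (\<Sum>i<m. \<Sum>j<m. k i j * Mg i * Mg j)"
  proof -
    have "(\<Sum>v<n. \<Sum>w<n. A v w) = (1 / real n) * (\<Sum>v<n. (\<Sum>j<m. k (G n v) j * Mg j) * s v)"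
      by (simp add: inner sum_distrib_left ac_simps)
    also have "(\<Sum>v<n. (\<Sum>j<m. k (G n v) j * Mg j) * s v) = (\<Sum>i<m. (\<Sum>j<m. k i j * Mg j) * Mg i)"
      unfolding Mg_def by (rule sum_block[OF n])
    also have "\<dots> = (\<Sum>i<m. \<Sum>j<m. k i j * Mg i * Mg j)"
      by (simp add: sum_distrib_left sum_distrib_right ac_simps)
    finally show ?thesis .
  qed
  have Q: "bc * (\<Sum>i<m. \<Sum>j<m. k i j * Mg i * Mg j) = (\<Sum>l<m. Lam l * (Zv n s l)^2)"
    unfolding Zv_def Mg_def by (rule quad_form)
  have "bc * interaction n (G n) k s = bc * ((\<Sum>v<n. \<Sum>w<n. A v w) - (\<Sum>v<n. A v v)) / 2"
    using I sq by simp
  also have "\<dots> = (1 / (2 * real n)) * (bc * (\<Sum>i<m. \<Sum>j<m. k i j * Mg i * Mg j))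
           - bc / (2 * real n) * (\<Sum>v<n. k (G n v) (G n v))"
    unfolding full diag by (simp add: field_simps)
  finally show ?thesis unfolding Q .
qed

lemma linear_term:
  assumes n: "n \<in> admissible_sizes m p"
  shows "(\<Sum>j<m. ee n j * x j * Zv n s j) = (\<Sum>v<n. tt n x (G n v) * s v)"
proof -
  have "(\<Sum>j<m. ee n j * x j * Zv n s j) = (\<Sum>j<m. \<Sum>i<m. ee n j * x j * V i j / sqrt (p i) * block_mag n (G n) s i)"
    by (simp add: Zv_def sum_distrib_left ac_simps)
  also have "\<dots> = (\<Sum>i<m. \<Sum>j<m. ee n j * x j * V i j / sqrt (p i) * block_mag n (G n) s i)"
    by (rule sum.swap)
  also have "\<dots> = (\<Sum>i<m. tt n x i * block_mag n (G n) s i)"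
    by (simp add: tt_def sum_distrib_right sum_divide_distrib)
  also have "\<dots> = (\<Sum>v<n. tt n x (G n v) * s v)"
    by (rule sum_block[OF n, symmetric])
  finally show ?thesis .
qed

end


lemma nd_c:
  assumes c: "c > 0"
  shows "normal_density \<mu> (1 / sqrt c) y = sqrt (c / (2 * pi)) * exp (- (c * (y - \<mu>)^2) / 2)"
proof -
  have s2: "(1 / sqrt c)^2 = 1 / c" using c by (simp add: power_divide)
  have "1 / sqrt (2 * pi * (1 / c)) = sqrt (c / (2 * pi))"
    using c by (simp add: real_sqrt_divide)
  moreover have "- ((y - \<mu>)^2) / (2 * (1 / c)) = - (c * (y - \<mu>)^2) / 2"
    using c by (simp add: field_simps)
  ultimately show ?thesis unfolding normal_density_def s2 by simp
qed

context cw begin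

definition Zg :: "nat \<Rightarrow> real" where
  "Zg n = (\<Sum>\<tau>\<in>config_set n. exp (bc * interaction n (G n) k \<tau>))"
definition rho :: "nat \<Rightarrow> (nat \<Rightarrow> real) \<Rightarrow> real" where
  "rho n x = (\<Sum>s\<in>config_set n. exp (bc * interaction n (G n) k s) / Zg n *
      (\<Prod>j<m. normal_density (U_vec m n p V (G n) s j) (1 / sqrt (cc n j)) (x j)))"
definition qq :: "nat \<Rightarrow> (nat \<Rightarrow> real) \<Rightarrow> real" where
  "qq n x = exp (- (1/2) * (\<Sum>j<m-1. (lam j - (lam j)^2) * (x j)^2) - real n * (\<Sum>i<m. p i * Gf (tt n x i)))"

lemma prod_nd:
  assumes n: "n > 0"
  shows "(\<Prod>j<m. normal_density (u j) (1 / sqrt (cc n j)) (x j))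
       = (\<Prod>j<m. sqrt (cc n j / (2 * pi))) * exp (- (1/2) * (\<Sum>j<m. cc n j * (x j - u j)^2))"
proof -
  have "(\<Prod>j<m. normal_density (u j) (1 / sqrt (cc n j)) (x j))
      = (\<Prod>j<m. sqrt (cc n j / (2 * pi)) * exp (- (cc n j * (x j - u j)^2) / 2))"
    using cc_pos[OF n] by (intro prod.cong refl) (simp add: nd_c)
  also have "\<dots> = (\<Prod>j<m. sqrt (cc n j / (2 * pi))) * exp (\<Sum>j<m. - (cc n j * (x j - u j)^2) / 2)"
    by (simp add: prod.distrib exp_sum)
  also have "(\<Sum>j<m. - (cc n j * (x j - u j)^2) / 2) = - (1/2) * (\<Sum>j<m. cc n j * (x j - u j)^2)"
    by (simp add: sum_distrib_left sum_divide_distrib)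
  finally show ?thesis .
qed

lemma exponent_eq:
  assumes n: "n \<in> admissible_sizes m p" and s: "s \<in> config_set n"
  shows "bc * interaction n (G n) k s - (1/2) * (\<Sum>j<m. cc n j * (x j - U_vec m n p V (G n) s j)^2)
       = - bc / (2 * real n) * (\<Sum>v<n. k (G n v) (G n v)) - (1/2) * (\<Sum>j<m. cc n j * (x j)^2)
         + (\<Sum>v<n. tt n x (G n v) * s v)"
proof -
  have npos: "n > 0" using adm_pos[OF n] .
  have each: "cc n j * (x j - U_vec m n p V (G n) s j)^2
      = cc n j * (x j)^2 - 2 * (ee n j * x j * Zv n s j) + Lam j / real n * (Zv n s j)^2" if "j < m" for j
  proof -
    have "cc n j * (x j - U_vec m n p V (G n) s j)^2 = cc n j * (x j - gam n j * Zv n s j)^2"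
      using that by (simp add: U_Zv)
    also have "\<dots> = cc n j * (x j)^2 - 2 * ((cc n j * gam n j) * x j * Zv n s j) + (cc n j * (gam n j)^2) * (Zv n s j)^2"
      by (simp add: power2_eq_square algebra_simps)
    also have "\<dots> = cc n j * (x j)^2 - 2 * (ee n j * x j * Zv n s j) + Lam j / real n * (Zv n s j)^2"
      by (simp add: cc_gam[OF npos] cc_gam2[OF npos])
    finally show ?thesis .
  qed
  have "(\<Sum>j<m. cc n j * (x j - U_vec m n p V (G n) s j)^2)
      = (\<Sum>j<m. cc n j * (x j)^2) - 2 * (\<Sum>j<m. ee n j * x j * Zv n s j) + (1 / real n) * (\<Sum>j<m. Lam j * (Zv n s j)^2)"
    by (simp add: each sum.distrib sum_subtractf sum_distrib_left)
  then show ?thesis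
    using interaction_eq[OF n s] linear_term[OF n, of x s] by (simp add: field_simps)
qed

end


context cw begin

lemma quad_reduce:
  assumes n: "n > 0"
  shows "(\<Sum>j<m. cc n j * (1 - Lam j) * (x j)^2) = (\<Sum>j<m-1. (lam j - (lam j)^2) * (x j)^2)"
proof -
  have m: "{..<m} = insert (m-1) {..<m-1}" using m_pos by auto
  have "(\<Sum>j<m. cc n j * (1 - Lam j) * (x j)^2) = (\<Sum>j<m-1. cc n j * (1 - Lam j) * (x j)^2)"
    unfolding m by (simp add: Lam_def)
  also have "\<dots> = (\<Sum>j<m-1. (lam j - (lam j)^2) * (x j)^2)"
    by (intro sum.cong refl) (auto simp: cc_def Cn_diag_def Lam_def power2_eq_square algebra_simps)
  finally show ?thesis .
qed

lemma exponent_qq: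
  assumes n: "n > 0"
  shows "- (1/2) * (\<Sum>j<m. cc n j * (x j)^2) + (\<Sum>i<m. real n * p i * ln (cosh (tt n x i)))
       = - (1/2) * (\<Sum>j<m-1. (lam j - (lam j)^2) * (x j)^2) - real n * (\<Sum>i<m. p i * Gf (tt n x i))"
proof -
  have lc: "ln (cosh t) = t^2/2 - Gf t" for t by (simp add: Gf_def)
  have "(\<Sum>i<m. real n * p i * ln (cosh (tt n x i)))
      = real n / 2 * (\<Sum>i<m. p i * (tt n x i)^2) - real n * (\<Sum>i<m. p i * Gf (tt n x i))"
    by (simp add: lc sum_distrib_left sum_subtractf algebra_simps sum_divide_distrib)
  also have "real n / 2 * (\<Sum>i<m. p i * (tt n x i)^2) = (1/2) * (\<Sum>j<m. real n * (ee n j)^2 * (x j)^2)"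
    by (simp add: sum_p_tt2 sum_distrib_left power_mult_distrib ac_simps)
  also have "\<dots> = (1/2) * (\<Sum>j<m. cc n j * Lam j * (x j)^2)"
    by (simp add: n_ee2[OF n])
  finally have A: "(\<Sum>i<m. real n * p i * ln (cosh (tt n x i)))
      = (1/2) * (\<Sum>j<m. cc n j * Lam j * (x j)^2) - real n * (\<Sum>i<m. p i * Gf (tt n x i))" .
  have B: "(\<Sum>j<m. cc n j * (1 - Lam j) * (x j)^2) = (\<Sum>j<m. cc n j * (x j)^2) - (\<Sum>j<m. cc n j * Lam j * (x j)^2)"
    by (simp add: sum_subtractf[symmetric] algebra_simps)
  have "- (1/2) * (\<Sum>j<m. cc n j * (x j)^2) + (\<Sum>i<m. real n * p i * ln (cosh (tt n x i)))
      = - (1/2) * (\<Sum>j<m. cc n j * (1 - Lam j) * (x j)^2) - real n * (\<Sum>i<m. p i * Gf (tt n x i))"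
    unfolding A B by (simp add: algebra_simps)
  then show ?thesis using quad_reduce[OF n] by simp
qed

lemma exp_rearr: "exp (b::real) / Z * (K * exp (- (1/2) * S)) = K / Z * exp (b - (1/2) * S)"
proof -
  have "exp (b - (1/2)*S) = exp b * exp (- (1/2) * S)" by (simp add: exp_add[symmetric])
  then show ?thesis by simp
qed

lemma config_nonempty: "(\<lambda>v\<in>{..<n}. 1) \<in> config_set n"
  by (simp add: config_set_def)

lemma config_finite: "finite (config_set n)"
  by (simp add: config_set_def finite_PiE)

lemma Zg_pos: "Zg n > 0"
  unfolding Zg_def using config_nonempty config_finite
  by (intro sum_pos2[OF config_finite config_nonempty]) auto

lemma rho_qq:
  assumes n: "n \<in> admissible_sizes m p"
  shows "\<exists>\<kappa>>0. \<forall>x. rho n x = \<kappa> * qq n x"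
proof -
  have npos: "n > 0" using adm_pos[OF n] .
  define D where "D = (\<Sum>v<n. k (G n v) (G n v))"
  define K0 where "K0 = (\<Prod>j<m. sqrt (cc n j / (2 * pi)))"
  define \<kappa> where "\<kappa> = K0 / Zg n * exp (- bc / (2 * real n) * D) * 2 ^ n"
  have K0: "K0 > 0" unfolding K0_def using cc_pos[OF npos] by (intro prod_pos) auto
  have "\<kappa> > 0" unfolding \<kappa>_def using K0 Zg_pos by simp
  moreover have "rho n x = \<kappa> * qq n x" for x
  proof -
    define t where "t v = tt n x (G n v)" for v
    have "rho n x = (\<Sum>s\<in>config_set n. K0 / Zg n * exp (bc * interaction n (G n) k s
                      - (1/2) * (\<Sum>j<m. cc n j * (x j - U_vec m n p V (G n) s j)^2)))"
      unfolding rho_def K0_def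
      by (intro sum.cong refl) (simp only: prod_nd[OF npos] exp_rearr)
    also have "\<dots> = (\<Sum>s\<in>config_set n. K0 / Zg n * exp (- bc / (2 * real n) * D - (1/2) * (\<Sum>j<m. cc n j * (x j)^2))
                      * exp (\<Sum>v<n. s v * t v))"
    proof (intro sum.cong refl)
      fix s assume s: "s \<in> config_set n"
      have st: "(\<Sum>v<n. tt n x (G n v) * s v) = (\<Sum>v<n. s v * t v)"
        by (intro sum.cong refl) (simp add: t_def)
      have "bc * interaction n (G n) k s - (1/2) * (\<Sum>j<m. cc n j * (x j - U_vec m n p V (G n) s j)^2)
          = (- bc / (2 * real n) * D - (1/2) * (\<Sum>j<m. cc n j * (x j)^2)) + (\<Sum>v<n. s v * t v)"
        using exponent_eq[OF n s, of x] st by (simp add: D_def)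
      then show "K0 / Zg n * exp (bc * interaction n (G n) k s - (1/2) * (\<Sum>j<m. cc n j * (x j - U_vec m n p V (G n) s j)^2))
          = K0 / Zg n * exp (- bc / (2 * real n) * D - (1/2) * (\<Sum>j<m. cc n j * (x j)^2)) * exp (\<Sum>v<n. s v * t v)"
        by (simp only: exp_add mult.assoc)
    qed
    also have "\<dots> = K0 / Zg n * exp (- bc / (2 * real n) * D - (1/2) * (\<Sum>j<m. cc n j * (x j)^2))
                      * (\<Sum>s\<in>config_set n. exp (\<Sum>v<n. s v * t v))"
      by (simp add: sum_distrib_left)
    also have "(\<Sum>s\<in>config_set n. exp (\<Sum>v<n. s v * t v)) = (\<Prod>v<n. exp (t v) + exp (- t v))"
      by (rule config_sum)
    also have "\<dots> = (\<Prod>v<n. 2 * cosh (t v))"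
      by (intro prod.cong refl) (simp add: cosh_def)
    also have "\<dots> = 2 ^ n * exp (\<Sum>v<n. ln (cosh (t v)))"
      by (simp add: prod.distrib exp_sum)
    also have "(\<Sum>v<n. ln (cosh (t v))) = (\<Sum>i<m. real n * p i * ln (cosh (tt n x i)))"
      unfolding t_def by (rule sum_vertices[OF n])
    finally have "rho n x = \<kappa> * exp (- (1/2) * (\<Sum>j<m. cc n j * (x j)^2) + (\<Sum>i<m. real n * p i * ln (cosh (tt n x i))))"
      by (simp add: \<kappa>_def exp_add[symmetric] exp_diff ac_simps)
    then show ?thesis by (simp only: qq_def exponent_qq[OF npos])
  qed
  ultimately show ?thesis by blast
qed

end

context cw begin

lemma m_nonempty: "{..<m} \<noteq> {}"
proof -
  have "0 \<in> {..<m}" using m_pos by simp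
  then show ?thesis by blast
qed

definition pmin :: real where "pmin = Min (p ` {..<m})"

lemma pmin_pos: "pmin > 0"
proof -
  have "0 \<in> {..<m}" using m_pos by simp
  then have "{..<m} \<noteq> {}" by blast
  then show ?thesis unfolding pmin_def using p_pos by (subst Min_gr_iff) auto
qed

lemma pmin_le: "i < m \<Longrightarrow> pmin \<le> p i"
  unfolding pmin_def by (intro Min_le) auto

definition Hd :: "(nat \<Rightarrow> real) \<Rightarrow> real" where
  "Hd x = exp (pmin / 108) * exp (- (1/2) * (\<Sum>j<m-1. (lam j - (lam j)^2) * (x j)^2) - pmin / 108 * (x (m-1))^2)"

lemma qq_pos: "qq n x > 0" by (simp add: qq_def)

lemma qq_le_Hd:
  assumes n1: "n \<ge> 1"
  shows "qq n x \<le> Hd x"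
proof -
  define y where "y = x (m-1)"
  define c where "c = real n powr (-1/2) * y^2"
  have npos: "0 < real n" using n1 by simp
  have e4: "(real n powr (-1/4))^2 = real n powr (-1/2)"
    using npos by (subst powr_power) auto
  have e4': "(real n powr (- (1/4)))^2 = real n powr (- (1/2))" using e4 by simp
  have m1: "m - 1 < m" using m_pos by simp
  have "c = (ee n (m-1) * x (m-1))^2"
    by (simp add: c_def y_def ee_def power_mult_distrib e4 e4')
  also have "\<dots> \<le> (\<Sum>j<m. (ee n j * x j)^2)"
    by (rule member_le_sum) (use m1 in auto)
  also have "\<dots> = (\<Sum>i<m. p i * (tt n x i)^2)" by (rule sum_p_tt2[symmetric])
  finally have sum_ge: "c \<le> (\<Sum>i<m. p i * (tt n x i)^2)" .
  have "\<exists>i0<m. c \<le> (tt n x i0)^2"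
  proof (rule ccontr)
    assume "\<not> ?thesis"
    then have lt: "(tt n x i)^2 < c" if "i < m" for i using that by (auto simp: not_le)
    have "(\<Sum>i<m. p i * (tt n x i)^2) < (\<Sum>i<m. p i * c)"
      using m_nonempty p_pos lt by (intro sum_strict_mono) auto
    also have "\<dots> = c" by (simp add: sum_distrib_right[symmetric] p_sum)
    finally show False using sum_ge by simp
  qed
  then obtain i0 where i0: "i0 < m" "c \<le> (tt n x i0)^2" by blast
  have ab: "\<bar>y\<bar> * real n powr (-1/4) \<le> \<bar>tt n x i0\<bar>"
  proof -
    have "(\<bar>y\<bar> * real n powr (-1/4))^2 = c"
      by (simp add: c_def power_mult_distrib e4 e4')
    then have sq: "(\<bar>y\<bar> * real n powr (-1/4))^2 \<le> (tt n x i0)^2" using i0(2) by simp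
    have "\<bar>\<bar>y\<bar> * real n powr (-1/4)\<bar> \<le> \<bar>tt n x i0\<bar>"
      using sq by (simp only: abs_le_square_iff)
    then show ?thesis by simp
  qed
  have g1: "Gf (\<bar>y\<bar> * real n powr (-1/4)) \<le> Gf (tt n x i0)"
    using Gf_mono[OF _ ab] Gf_abs[of "tt n x i0"] by simp
  have g0: "0 \<le> Gf (\<bar>y\<bar> * real n powr (-1/4))" by (rule Gf_nonneg)
  have "pmin * ((y^2 - 1)/108) \<le> pmin * (real n * Gf (\<bar>y\<bar> * real n powr (-1/4)))"
    using Gf_scaled[OF n1, of y] pmin_pos by (intro mult_left_mono) auto
  also have "\<dots> = real n * (pmin * Gf (\<bar>y\<bar> * real n powr (-1/4)))" by simp
  also have "\<dots> \<le> real n * (p i0 * Gf (tt n x i0))"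
    using pmin_le[OF i0(1)] pmin_pos g1 g0 by (intro mult_left_mono mult_mono) auto
  also have "\<dots> \<le> real n * (\<Sum>i<m. p i * Gf (tt n x i))"
  proof (intro mult_left_mono)
    show "p i0 * Gf (tt n x i0) \<le> (\<Sum>i<m. p i * Gf (tt n x i))"
      using i0(1) p_pos Gf_nonneg by (intro member_le_sum) auto
  qed simp
  finally have key: "pmin * ((y^2 - 1)/108) \<le> real n * (\<Sum>i<m. p i * Gf (tt n x i))" .
  have "qq n x \<le> exp (- (1/2) * (\<Sum>j<m-1. (lam j - (lam j)^2) * (x j)^2) - pmin * ((y^2 - 1)/108))"
    unfolding qq_def using key by simp
  also have "\<dots> = Hd x"
    unfolding Hd_def y_def by (simp add: exp_add[symmetric] algebra_simps diff_divide_distrib)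
  finally show ?thesis .
qed


definition phi :: "real \<Rightarrow> real" where "phi t = (if t = 0 then 1/12 else Gf t / t^4)"

lemma isCont_phi: "isCont phi 0"
proof -
  have "(phi \<longlongrightarrow> 1/12) (at 0)"
  proof (rule Lim_transform_eventually[OF Gf_lim])
    show "\<forall>\<^sub>F t in at 0. Gf t / t ^ 4 = phi t"
      by (simp add: eventually_at_filter phi_def)
  qed
  then show ?thesis by (simp add: isCont_def phi_def)
qed

lemma ee_lim0: "(\<lambda>n. ee n j) \<longlonglongrightarrow> 0"
proof -
  have a: "(\<lambda>n. real n powr (-1/4)) \<longlonglongrightarrow> 0"
    by (rule tendsto_neg_powr[OF _ filterlim_real_sequentially]) simp
  have b: "(\<lambda>n. real n powr (-1/2)) \<longlonglongrightarrow> 0"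
    by (rule tendsto_neg_powr[OF _ filterlim_real_sequentially]) simp
  show ?thesis
  proof (cases "j = m - 1")
    case True then show ?thesis using a by (simp add: ee_def)
  next
    case False then show ?thesis using tendsto_mult[OF tendsto_const b, of "lam j"] by (simp add: ee_def)
  qed
qed

lemma ee_lim4: "(\<lambda>n. real n powr (1/4) * ee n j) \<longlonglongrightarrow> (if j = m - 1 then 1 else 0)"
proof (cases "j = m - 1")
  case True
  have "\<forall>\<^sub>F n in sequentially. 1 = real n powr (1/4) * ee n j"
  proof (rule eventually_sequentiallyI[of 1])
    fix n :: nat assume "1 \<le> n"
    then have "real n powr (1/4) * real n powr (-1/4) = real n powr (1/4 + -1/4)"
      by (intro powr_add[symmetric])
    then show "1 = real n powr (1/4) * ee n j" using True \<open>1 \<le> n\<close> by (simp add: ee_def)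
  qed
  then have "(\<lambda>n. real n powr (1/4) * ee n j) \<longlonglongrightarrow> 1"
    by (rule Lim_transform_eventually[OF tendsto_const])
  then show ?thesis using True by simp
next
  case False
  have c: "(\<lambda>n. lam j * real n powr (-1/4)) \<longlonglongrightarrow> lam j * 0"
    by (intro tendsto_mult tendsto_const tendsto_neg_powr[OF _ filterlim_real_sequentially]) simp
  have "\<forall>\<^sub>F n in sequentially. lam j * real n powr (-1/4) = real n powr (1/4) * ee n j"
  proof (rule eventually_sequentiallyI[of 1])
    fix n :: nat assume "1 \<le> n"
    have "real n powr (1/4) * real n powr (-1/2) = real n powr (1/4 + -1/2)"
      by (intro powr_add[symmetric])
    then show "lam j * real n powr (-1/4) = real n powr (1/4) * ee n j" using False by (simp add: ee_def)
  qed
  from Lim_transform_eventually[OF c this] show ?thesis using False by simp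
qed

lemma tt_lim0: "i < m \<Longrightarrow> (\<lambda>n. tt n x i) \<longlonglongrightarrow> 0"
proof -
  assume i: "i < m"
  then have "p i > 0" using p_pos by simp
  then have "sqrt (p i) \<noteq> 0" by simp
  then have "(\<lambda>n. tt n x i) \<longlonglongrightarrow> (\<Sum>j<m. 0 * x j * V i j) / sqrt (p i)"
    unfolding tt_def by (intro tendsto_intros ee_lim0)
  then show ?thesis by simp
qed

lemma tt_lim4: "i < m \<Longrightarrow> (\<lambda>n. real n powr (1/4) * tt n x i) \<longlonglongrightarrow> x (m-1) * V i (m-1) / sqrt (p i)"
proof -
  have eq: "real n powr (1/4) * tt n x i = (\<Sum>j<m. (real n powr (1/4) * ee n j) * x j * V i j) / sqrt (p i)" for n
    by (simp add: tt_def sum_distrib_left ac_simps)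
  assume i: "i < m"
  then have "p i > 0" using p_pos by simp
  then have "sqrt (p i) \<noteq> 0" by simp
  then have "(\<lambda>n. (\<Sum>j<m. (real n powr (1/4) * ee n j) * x j * V i j) / sqrt (p i))
      \<longlonglongrightarrow> (\<Sum>j<m. (if j = m - 1 then 1 else 0) * x j * V i j) / sqrt (p i)"
    by (intro tendsto_intros ee_lim4)
  moreover have "(\<Sum>j<m. (if j = m - 1 then 1 else 0) * x j * V i j) = x (m-1) * V i (m-1)"
  proof -
    have "(\<Sum>j<m. (if j = m - 1 then 1 else 0) * x j * V i j) = (\<Sum>j<m. if j = m - 1 then x j * V i j else 0)"
      by (rule sum.cong[OF refl]) simp
    also have "\<dots> = x (m-1) * V i (m-1)" using m_pos by (subst sum.delta) auto
    finally show ?thesis .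
  qed
  ultimately show ?thesis unfolding eq by simp
qed

lemma nGf_eq:
  assumes n: "n > 0"
  shows "real n * Gf t = phi t * (real n powr (1/4) * t)^4"
proof (cases "t = 0")
  case True then show ?thesis by simp
next
  case False
  have "(real n powr (1/4))^4 = real n" using n by (subst powr_power) auto
  then show ?thesis using False by (simp add: phi_def power_mult_distrib)
qed

lemma nGf_lim:
  assumes i: "i < m"
  shows "(\<lambda>n. real n * Gf (tt n x i)) \<longlonglongrightarrow> 1/12 * (x (m-1) * V i (m-1) / sqrt (p i))^4"
proof -
  have "(\<lambda>n. phi (tt n x i)) \<longlonglongrightarrow> phi 0"
    by (rule isCont_tendsto_compose[OF isCont_phi tt_lim0[OF i]])
  then have "(\<lambda>n. phi (tt n x i) * (real n powr (1/4) * tt n x i)^4) \<longlonglongrightarrow> phi 0 * (x (m-1) * V i (m-1) / sqrt (p i))^4"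
    by (intro tendsto_intros tt_lim4[OF i])
  moreover have "\<forall>\<^sub>F n in sequentially. phi (tt n x i) * (real n powr (1/4) * tt n x i)^4 = real n * Gf (tt n x i)"
    by (rule eventually_sequentiallyI[of 1]) (simp add: nGf_eq)
  ultimately show ?thesis using Lim_transform_eventually by (fastforce simp: phi_def)
qed

lemma qq_lim: "(\<lambda>n. qq n x) \<longlonglongrightarrow> limit_density m p lam V x"
proof -
  have eq: "qq n x = exp (- (1/2) * (\<Sum>j<m-1. (lam j - (lam j)^2) * (x j)^2) - (\<Sum>i<m. p i * (real n * Gf (tt n x i))))" for n
    by (simp add: qq_def sum_distrib_left ac_simps)
  have L: "(\<lambda>n. qq n x) \<longlonglongrightarrow> exp (- (1/2) * (\<Sum>j<m-1. (lam j - (lam j)^2) * (x j)^2) - (\<Sum>i<m. p i * (1/12 * (x (m-1) * V i (m-1) / sqrt (p i))^4)))"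
    unfolding eq by (intro tendsto_intros nGf_lim) simp
  have S: "(\<Sum>i<m. p i * (1/12 * (x (m-1) * V i (m-1) / sqrt (p i))^4)) = (x (m-1))^4 / 12 * (\<Sum>i<m. (V i (m-1))^4 / p i)"
  proof -
    have te: "p i * (1/12 * (x (m-1) * V i (m-1) / sqrt (p i))^4) = (x (m-1))^4 / 12 * ((V i (m-1))^4 / p i)" if "i < m" for i
    proof -
      have pi: "p i > 0" using p_pos that by simp
      have "(sqrt (p i))^4 = ((sqrt (p i))^2)^2" by (simp flip: power_mult)
      also have "\<dots> = (p i)^2" using pi by simp
      finally have s4: "(sqrt (p i))^4 = (p i)^2" .
      show ?thesis using pi s4 by (simp add: power_divide power_mult_distrib field_simps power2_eq_square)
    qed
    have "(\<Sum>i<m. p i * (1/12 * (x (m-1) * V i (m-1) / sqrt (p i))^4)) = (\<Sum>i<m. (x (m-1))^4 / 12 * ((V i (m-1))^4 / p i))"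
      by (rule sum.cong[OF refl]) (rule te, simp)
    then show ?thesis by (simp only: sum_distrib_left)
  qed
  show ?thesis using L unfolding S limit_density_def .
qed

end

lemma cont_coord [continuous_intros]: "continuous_on S (\<lambda>x::nat\<Rightarrow>real. x j)"
  using continuous_on_subset[OF continuous_on_product_coordinates[of j]] by blast

lemma cont_Gf [continuous_intros]: "continuous_on S f \<Longrightarrow> continuous_on S (\<lambda>x. Gf (f x))"
  unfolding Gf_def by (intro continuous_intros) (auto simp: cosh_real_nonzero)

lemma space_Rm: "space (Rm m) = PiE {..<m} (\<lambda>_. UNIV)"
  by (simp add: Rm_def space_PiM)

lemma id_meas_Rm: "(\<lambda>x. x) \<in> Rm m \<rightarrow>\<^sub>M (borel :: (nat \<Rightarrow> real) measure)"
proof -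
  have "(\<lambda>x. x) \<in> Rm m \<rightarrow>\<^sub>M PiM UNIV (\<lambda>_. borel :: real measure)"
  proof (rule measurable_PiM_single')
    fix i :: nat
    show "(\<lambda>x. x i) \<in> Rm m \<rightarrow>\<^sub>M (borel :: real measure)"
    proof (cases "i < m")
      case True
      then have i: "i \<in> {..<m}" by simp
      have "(\<lambda>x. x i) \<in> Rm m \<rightarrow>\<^sub>M lborel" unfolding Rm_def by (rule measurable_component_singleton[OF i])
      then show ?thesis by simp
    next
      case False
      have c: "(\<lambda>x. undefined) \<in> Rm m \<rightarrow>\<^sub>M (borel :: real measure)" by (rule measurable_const) simp
      have eq: "\<And>x. x \<in> space (Rm m) \<Longrightarrow> undefined = x i" using False by (auto simp: space_Rm PiE_def extensional_def)
      show ?thesis using measurable_cong[of "Rm m" "\<lambda>_. undefined" "\<lambda>x. x i" borel] eq c by blast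
    qed
  qed simp
  moreover have "(Rm m \<rightarrow>\<^sub>M (borel :: (nat \<Rightarrow> real) measure)) = (Rm m \<rightarrow>\<^sub>M PiM UNIV (\<lambda>_. borel :: real measure))"
    by (rule measurable_cong_sets[OF refl]) (simp add: sets_PiM_equal_borel)
  ultimately show ?thesis by simp
qed

lemma cont_borel_Rm:
  fixes f :: "(nat \<Rightarrow> real) \<Rightarrow> real"
  assumes f: "continuous_on (space (Rm m)) f"
  shows "f \<in> borel_measurable (Rm m)"
proof -
  have cr: "continuous_on UNIV (\<lambda>x::nat\<Rightarrow>real. restrict x {..<m})"
  proof (intro continuous_on_coordinatewise_then_product)
    fix i show "continuous_on UNIV (\<lambda>x::nat\<Rightarrow>real. restrict x {..<m} i)"
      by (cases "i < m") (auto simp: restrict_def)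
  qed
  have "continuous_on UNIV (f \<circ> (\<lambda>x. restrict x {..<m}))"
  proof (rule continuous_on_compose[OF cr])
    show "continuous_on ((\<lambda>x. restrict x {..<m}) ` UNIV) f"
    proof (rule continuous_on_subset[OF f])
      have "restrict x {..<m} \<in> PiE {..<m} (\<lambda>_. UNIV)" for x :: "nat \<Rightarrow> real" by (rule restrict_PiE_iff[THEN iffD2]) simp
      then show "(\<lambda>x. restrict x {..<m}) ` UNIV \<subseteq> space (Rm m)" unfolding space_Rm by blast
    qed
  qed
  then have g: "(f \<circ> (\<lambda>x. restrict x {..<m})) \<in> borel_measurable borel"
    by (rule borel_measurable_continuous_onI)
  have "(\<lambda>x. (f \<circ> (\<lambda>x. restrict x {..<m})) x) \<in> borel_measurable (Rm m)"
    by (rule measurable_compose[OF id_meas_Rm g])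
  moreover have "\<And>x. x \<in> space (Rm m) \<Longrightarrow> (f \<circ> (\<lambda>x. restrict x {..<m})) x = f x"
    by (simp add: space_Rm PiE_restrict)
  ultimately show ?thesis using measurable_cong[of "Rm m" "f \<circ> (\<lambda>x. restrict x {..<m})" f borel] by blast
qed


context cw begin

lemma qq_cont: "continuous_on S (qq n)"
  unfolding qq_def[abs_def] tt_def by (intro continuous_intros) (use p_pos in auto)

lemma Hd_cont: "continuous_on S Hd"
  unfolding Hd_def[abs_def] by (intro continuous_intros)

lemma ld_cont: "continuous_on S (limit_density m p lam V)"
  unfolding limit_density_def[abs_def] by (intro continuous_intros) (use p_pos in auto)


lemma qq_meas: "qq n \<in> borel_measurable (Rm m)"
  by (rule cont_borel_Rm[OF qq_cont])
lemma Hd_meas: "Hd \<in> borel_measurable (Rm m)"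
  by (rule cont_borel_Rm[OF Hd_cont])
lemma ld_meas: "limit_density m p lam V \<in> borel_measurable (Rm m)"
  by (rule cont_borel_Rm[OF ld_cont])


definition aa :: "nat \<Rightarrow> real" where
  "aa j = (if j = m - 1 then pmin / 108 else (lam j - (lam j)^2) / 2)"

lemma aa_pos: "j < m \<Longrightarrow> aa j > 0"
proof -
  assume j: "j < m"
  show ?thesis
  proof (cases "j = m - 1")
    case True then show ?thesis using pmin_pos by (simp add: aa_def)
  next
    case False
    then have "j < m - 1" using j by simp
    then have "0 < lam j" "lam j < 1" using lam_bounds by auto
    then have "0 < lam j * (1 - lam j)" by simp
    then show ?thesis using False by (simp add: aa_def power2_eq_square algebra_simps)
  qed
qed

lemma Hd_prod: "Hd x = exp (pmin / 108) * (\<Prod>j<m. exp (- aa j * (x j)^2))"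
proof -
  have m: "{..<m} = insert (m-1) {..<m-1}" using m_pos by auto
  have "(\<Sum>j<m. - aa j * (x j)^2) = - (pmin / 108) * (x (m-1))^2 + (\<Sum>j<m-1. - ((lam j - (lam j)^2) / 2) * (x j)^2)"
  proof -
    have "(\<Sum>j<m. - aa j * (x j)^2) = - aa (m-1) * (x (m-1))^2 + (\<Sum>j<m-1. - aa j * (x j)^2)"
      unfolding m by simp
    also have "(\<Sum>j<m-1. - aa j * (x j)^2) = (\<Sum>j<m-1. - ((lam j - (lam j)^2) / 2) * (x j)^2)"
      by (intro sum.cong refl) (simp add: aa_def)
    finally show ?thesis by (simp add: aa_def)
  qed
  then have "(\<Prod>j<m. exp (- aa j * (x j)^2)) = exp (- (1/2) * (\<Sum>j<m-1. (lam j - (lam j)^2) * (x j)^2) - pmin / 108 * (x (m-1))^2)"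
    by (simp add: exp_sum[symmetric] sum_distrib_left sum_negf)
  then show ?thesis by (simp add: Hd_def)
qed

end

lemma exp_sq_integrable:
  fixes c :: real assumes c: "c > 0"
  shows "integrable lborel (\<lambda>y. exp (- c * y^2))"
proof -
  have eq: "exp (- c * y^2) = normal_density 0 (1 / sqrt (2 * c)) y / sqrt (2 * c / (2 * pi))" for y
    using c by (simp add: nd_c)
  have "integrable lborel (\<lambda>y. normal_density 0 (1 / sqrt (2 * c)) y / sqrt (2 * c / (2 * pi)))"
    using c by (intro integrable_divide integrable_normal_density) simp
  moreover have "(\<lambda>y. exp (- c * y^2)) = (\<lambda>y. normal_density 0 (1 / sqrt (2 * c)) y / sqrt (2 * c / (2 * pi)))"
    by (rule ext) (rule eq)
  ultimately show ?thesis by (simp only:)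
qed

context cw begin

lemma Hd_integrable: "integrable (Rm m) Hd"
proof -
  interpret L: product_sigma_finite "\<lambda>_. lborel :: real measure"
    by (intro product_sigma_finite.intro sigma_finite_lborel)
  have "integrable (PiM {..<m} (\<lambda>_. lborel)) (\<lambda>x. \<Prod>j\<in>{..<m}. exp (- aa j * (x j)^2))"
  proof (rule L.product_integrable_prod)
    fix j assume "j \<in> {..<m}"
    then show "integrable lborel (\<lambda>y. exp (- aa j * y^2))" by (intro exp_sq_integrable aa_pos) simp
  qed simp
  then have "integrable (Rm m) (\<lambda>x. exp (pmin / 108) * (\<Prod>j<m. exp (- aa j * (x j)^2)))"
    unfolding Rm_def by (rule integrable_mult_right)
  then show ?thesis by (simp add: Hd_prod[abs_def])
qed

lemma ld_le_Hd: "limit_density m p lam V x \<le> Hd x"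
  by (rule LIMSEQ_le_const2[OF qq_lim]) (use qq_le_Hd in auto)

lemma ld_pos: "limit_density m p lam V x > 0"
  by (simp add: limit_density_def)

lemma ld_integrable: "integrable (Rm m) (limit_density m p lam V)"
proof (rule Bochner_Integration.integrable_bound[OF Hd_integrable ld_meas])
  show "AE x in Rm m. norm (limit_density m p lam V x) \<le> norm (Hd x)"
  proof (intro AE_I2)
    fix x
    have a: "0 < limit_density m p lam V x" by (rule ld_pos)
    have b: "limit_density m p lam V x \<le> Hd x" by (rule ld_le_Hd)
    show "norm (limit_density m p lam V x) \<le> norm (Hd x)" using a b by simp
  qed
qed

lemma Rm_space_pos: "emeasure (Rm m) (space (Rm m)) \<noteq> 0"
proof -
  interpret L: product_sigma_finite "\<lambda>_. lborel :: real measure"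
    by (intro product_sigma_finite.intro sigma_finite_lborel)
  have "emeasure (Rm m) (PiE {..<m} (\<lambda>_. {0..1})) = (\<Prod>j<m. emeasure lborel {0..1::real})"
    unfolding Rm_def by (rule L.emeasure_PiM) auto
  also have "\<dots> = 1" by simp
  finally have e1: "emeasure (Rm m) (PiE {..<m} (\<lambda>_. {0..1})) = 1" .
  have "emeasure (Rm m) (PiE {..<m} (\<lambda>_. {0..1})) \<le> emeasure (Rm m) (space (Rm m))"
    by (rule emeasure_space)
  then show ?thesis using e1 by auto
qed

lemma ld_integral_pos: "integral\<^sup>L (Rm m) (limit_density m p lam V) > 0"
proof -
  have nn: "AE x in Rm m. 0 \<le> limit_density m p lam V x" using ld_pos by (intro AE_I2 less_imp_le)
  have ge: "integral\<^sup>L (Rm m) (limit_density m p lam V) \<ge> 0" by (rule integral_nonneg_AE[OF nn])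
  have "integral\<^sup>L (Rm m) (limit_density m p lam V) \<noteq> 0"
  proof
    assume "integral\<^sup>L (Rm m) (limit_density m p lam V) = 0"
    then have "AE x in Rm m. limit_density m p lam V x = 0"
      using integral_nonneg_eq_0_iff_AE[OF ld_integrable nn] by simp
    then have "AE x in Rm m. False" using ld_pos by (auto elim!: AE_mp intro!: AE_I2 simp: less_le)
    then have "emeasure (Rm m) {x \<in> space (Rm m). \<not> False} = 0"
      by (subst AE_iff_measurable[symmetric]) auto
    then show False using Rm_space_pos by simp
  qed
  then show ?thesis using ge by simp
qed

end

lemma normal_shift:
  fixes s u :: real assumes s: "0 < s"
  shows "distr (density lborel (normal_density 0 s)) lborel (\<lambda>y. u + y) = density lborel (normal_density u s)"
proof -
  interpret P: prob_space "density lborel (normal_density 0 s)"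
    by (rule prob_space_normal_density[OF s])
  have "distributed (density lborel (normal_density 0 s)) lborel (\<lambda>x. x) (normal_density 0 s)"
    unfolding distributed_def by (auto simp: distr_id2)
  from P.normal_density_affine[OF this s, of 1 u]
  have "distributed (density lborel (normal_density 0 s)) lborel (\<lambda>x. u + x) (normal_density u s)"
    by simp
  then show ?thesis unfolding distributed_def by simp
qed

lemma gauss_shift:
  fixes s u :: "nat \<Rightarrow> real" and I :: "nat set"
  assumes I: "finite I" and s: "\<And>i. i \<in> I \<Longrightarrow> 0 < s i"
  shows "distr (PiM I (\<lambda>i. density lborel (normal_density 0 (s i)))) (PiM I (\<lambda>_. lborel)) (\<lambda>y. \<lambda>i\<in>I. u i + y i)
       = PiM I (\<lambda>i. density lborel (normal_density (u i) (s i)))"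
proof -
  define s' where "s' i = (if i \<in> I then s i else 1)" for i
  have s': "0 < s' i" for i using s by (simp add: s'_def)
  have eq1: "PiM I (\<lambda>i. density lborel (normal_density 0 (s i))) = PiM I (\<lambda>i. density lborel (normal_density 0 (s' i)))"
    by (rule PiM_cong) (auto simp: s'_def)
  have eq2: "PiM I (\<lambda>i. density lborel (normal_density (u i) (s i))) = PiM I (\<lambda>i. density lborel (normal_density (u i) (s' i)))"
    by (rule PiM_cong) (auto simp: s'_def)
  interpret N: product_sigma_finite "\<lambda>i. density lborel (normal_density (u i) (s' i))"
    by (intro product_sigma_finite.intro prob_space_imp_sigma_finite prob_space_normal_density s')
  interpret N0: product_sigma_finite "\<lambda>i. density lborel (normal_density 0 (s' i))"
    by (intro product_sigma_finite.intro prob_space_imp_sigma_finite prob_space_normal_density s')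
  have meas: "(\<lambda>y. \<lambda>i\<in>I. u i + y i) \<in> PiM I (\<lambda>i. density lborel (normal_density 0 (s' i))) \<rightarrow>\<^sub>M PiM I (\<lambda>_. lborel)"
    by measurable
  have "distr (PiM I (\<lambda>i. density lborel (normal_density 0 (s' i)))) (PiM I (\<lambda>_. lborel)) (\<lambda>y. \<lambda>i\<in>I. u i + y i)
       = PiM I (\<lambda>i. density lborel (normal_density (u i) (s' i)))"
  proof (rule N.PiM_eqI[OF I])
    show "sets (distr (PiM I (\<lambda>i. density lborel (normal_density 0 (s' i)))) (PiM I (\<lambda>_. lborel)) (\<lambda>y. \<lambda>i\<in>I. u i + y i))
        = sets (PiM I (\<lambda>i. density lborel (normal_density (u i) (s' i))))"
      by (auto intro!: sets_PiM_cong)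
  next
    fix A assume A: "\<And>i. i \<in> I \<Longrightarrow> A i \<in> sets (density lborel (normal_density (u i) (s' i)))"
    have Al: "A i \<in> sets lborel" if "i \<in> I" for i using A[OF that] by simp
    have "PiE I A \<in> sets (PiM I (\<lambda>_. lborel))" using Al by (auto intro!: sets_PiM_I_finite I)
    then have "emeasure (distr (PiM I (\<lambda>i. density lborel (normal_density 0 (s' i)))) (PiM I (\<lambda>_. lborel)) (\<lambda>y. \<lambda>i\<in>I. u i + y i)) (PiE I A)
       = emeasure (PiM I (\<lambda>i. density lborel (normal_density 0 (s' i)))) ((\<lambda>y. \<lambda>i\<in>I. u i + y i) -` PiE I A \<inter> space (PiM I (\<lambda>i. density lborel (normal_density 0 (s' i)))))"
      by (rule emeasure_distr[OF meas])
    also have "(\<lambda>y. \<lambda>i\<in>I. u i + y i) -` PiE I A \<inter> space (PiM I (\<lambda>i. density lborel (normal_density 0 (s' i))))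
        = PiE I (\<lambda>i. (\<lambda>y. u i + y) -` A i \<inter> space lborel)"
      by (auto simp: space_PiM PiE_def Pi_def extensional_def)
    also have "emeasure (PiM I (\<lambda>i. density lborel (normal_density 0 (s' i)))) \<dots>
        = (\<Prod>i\<in>I. emeasure (density lborel (normal_density 0 (s' i))) ((\<lambda>y. u i + y) -` A i \<inter> space lborel))"
    proof (intro N0.emeasure_PiM I)
      fix i assume i: "i \<in> I"
      have "(\<lambda>y. u i + y) \<in> borel_measurable borel" by measurable
      then have "(\<lambda>y. u i + y) -` A i \<in> sets borel" using Al[OF i] by (intro measurable_sets_borel) auto
      then show "(\<lambda>y. u i + y) -` A i \<inter> space lborel \<in> sets (density lborel (normal_density 0 (s' i)))" by simp
    qed
    also have "\<dots> = (\<Prod>i\<in>I. emeasure (density lborel (normal_density (u i) (s' i))) (A i))"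
    proof (rule prod.cong[OF refl])
      fix i assume i: "i \<in> I"
      have "emeasure (density lborel (normal_density (u i) (s' i))) (A i)
          = emeasure (distr (density lborel (normal_density 0 (s' i))) lborel (\<lambda>y. u i + y)) (A i)"
        using normal_shift[OF s', of i "u i"] by simp
      also have "\<dots> = emeasure (density lborel (normal_density 0 (s' i))) ((\<lambda>y. u i + y) -` A i \<inter> space (density lborel (normal_density 0 (s' i))))"
        using Al[OF i] by (intro emeasure_distr) auto
      finally show "emeasure (density lborel (normal_density 0 (s' i))) ((\<lambda>y. u i + y) -` A i \<inter> space lborel)
          = emeasure (density lborel (normal_density (u i) (s' i))) (A i)" by simp
    qed
    finally show "emeasure (distr (PiM I (\<lambda>i. density lborel (normal_density 0 (s' i)))) (PiM I (\<lambda>_. lborel)) (\<lambda>y. \<lambda>i\<in>I. u i + y i)) (PiE I A)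
       = (\<Prod>i\<in>I. emeasure (density lborel (normal_density (u i) (s' i))) (A i))" .
  qed
  then show ?thesis using eq1 eq2 by simp
qed


lemma PiM_density_prod:
  fixes g :: "nat \<Rightarrow> real \<Rightarrow> real" and I :: "nat set"
  assumes I: "finite I" and meas: "\<And>i. i \<in> I \<Longrightarrow> g i \<in> borel_measurable lborel"
    and nn: "\<And>i x. i \<in> I \<Longrightarrow> 0 \<le> g i x"
    and ps: "\<And>i. i \<in> I \<Longrightarrow> prob_space (density lborel (g i))"
  shows "PiM I (\<lambda>i. density lborel (g i)) = density (PiM I (\<lambda>_. lborel)) (\<lambda>x. ennreal (\<Prod>i\<in>I. g i (x i)))"
proof -
  define N where "N i = (if i \<in> I then density lborel (g i) else lborel)" for i
  have eqN: "PiM I (\<lambda>i. density lborel (g i)) = PiM I N"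
    by (rule PiM_cong) (auto simp: N_def)
  interpret N: product_sigma_finite N
  proof (intro product_sigma_finite.intro)
    fix i show "sigma_finite_measure (N i)"
      using ps[of i] by (auto simp: N_def intro: prob_space_imp_sigma_finite sigma_finite_lborel)
  qed
  interpret L: product_sigma_finite "\<lambda>_. lborel :: real measure"
    by (intro product_sigma_finite.intro sigma_finite_lborel)
  have Gm: "(\<lambda>x. ennreal (\<Prod>i\<in>I. g i (x i))) \<in> borel_measurable (PiM I (\<lambda>_. lborel))"
  proof -
    have "(\<lambda>x. \<Prod>i\<in>I. g i (x i)) \<in> borel_measurable (PiM I (\<lambda>_. lborel))"
    proof (rule borel_measurable_prod)
      fix i assume i: "i \<in> I"
      have "(\<lambda>x. x i) \<in> PiM I (\<lambda>_. lborel) \<rightarrow>\<^sub>M lborel" using i by measurable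
      then show "(\<lambda>x. g i (x i)) \<in> borel_measurable (PiM I (\<lambda>_. lborel))"
        using meas[OF i] by (rule measurable_compose)
    qed
    then show ?thesis by measurable
  qed
  have "density (PiM I (\<lambda>_. lborel)) (\<lambda>x. ennreal (\<Prod>i\<in>I. g i (x i))) = PiM I N"
  proof (rule N.PiM_eqI[OF I])
    show "sets (density (PiM I (\<lambda>_. lborel)) (\<lambda>x. ennreal (\<Prod>i\<in>I. g i (x i)))) = sets (PiM I N)"
      by (auto intro!: sets_PiM_cong simp: N_def)
  next
    fix A assume A: "\<And>i. i \<in> I \<Longrightarrow> A i \<in> sets (N i)"
    have Al: "A i \<in> sets lborel" if "i \<in> I" for i using A[OF that] that by (simp add: N_def)
    have PA: "PiE I A \<in> sets (PiM I (\<lambda>_. lborel))" using Al by (auto intro!: sets_PiM_I_finite I)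
    have "emeasure (density (PiM I (\<lambda>_. lborel)) (\<lambda>x. ennreal (\<Prod>i\<in>I. g i (x i)))) (PiE I A)
        = (\<integral>\<^sup>+ x. ennreal (\<Prod>i\<in>I. g i (x i)) * indicator (PiE I A) x \<partial>PiM I (\<lambda>_. lborel))"
      by (rule emeasure_density[OF Gm PA])
    also have "\<dots> = (\<integral>\<^sup>+ x. (\<Prod>i\<in>I. ennreal (g i (x i)) * indicator (A i) (x i)) \<partial>PiM I (\<lambda>_. lborel))"
    proof (rule nn_integral_cong)
      fix x assume x: "x \<in> space (PiM I (\<lambda>_. lborel :: real measure))"
      show "ennreal (\<Prod>i\<in>I. g i (x i)) * indicator (PiE I A) x = (\<Prod>i\<in>I. ennreal (g i (x i)) * indicator (A i) (x i))"
      proof (cases "\<forall>i\<in>I. x i \<in> A i")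
        case True
        then have "x \<in> PiE I A" using x by (auto simp: space_PiM PiE_def)
        then show ?thesis using True nn by (simp add: prod_ennreal)
      next
        case False
        then obtain i where i: "i \<in> I" "x i \<notin> A i" by auto
        then have "x \<notin> PiE I A" by auto
        moreover have "(\<Prod>i\<in>I. ennreal (g i (x i)) * indicator (A i) (x i)) = 0"
          using i I by (intro prod_zero bexI[of _ i]) auto
        ultimately show ?thesis by simp
      qed
    qed
    also have "\<dots> = (\<Prod>i\<in>I. \<integral>\<^sup>+ y. ennreal (g i y) * indicator (A i) y \<partial>lborel)"
    proof (rule L.product_nn_integral_prod[OF I])
      fix i assume i: "i \<in> I"
      show "(\<lambda>y. ennreal (g i y) * indicator (A i) y) \<in> borel_measurable lborel"
        using meas[OF i] Al[OF i] by measurable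
    qed
    also have "\<dots> = (\<Prod>i\<in>I. emeasure (N i) (A i))"
    proof (rule prod.cong[OF refl])
      fix i assume i: "i \<in> I"
      have "(\<lambda>y. ennreal (g i y)) \<in> borel_measurable lborel" using meas[OF i] by measurable
      then show "(\<integral>\<^sup>+ y. ennreal (g i y) * indicator (A i) y \<partial>lborel) = emeasure (N i) (A i)"
        using i Al[OF i] by (simp add: N_def emeasure_density)
    qed
    finally show "emeasure (density (PiM I (\<lambda>_. lborel)) (\<lambda>x. ennreal (\<Prod>i\<in>I. g i (x i)))) (PiE I A) = (\<Prod>i\<in>I. emeasure (N i) (A i))" .
  qed
  then show ?thesis using eqN by simp
qed



context cw begin

lemma nd_prod_meas: "(\<lambda>x. \<Prod>j<m. normal_density (u j) (sg j) (x j)) \<in> borel_measurable (Rm m)"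
proof (rule borel_measurable_prod)
  fix j assume j: "j \<in> {..<m}"
  have "(\<lambda>x. x j) \<in> Rm m \<rightarrow>\<^sub>M lborel" unfolding Rm_def by (rule measurable_component_singleton[OF j])
  then have "(\<lambda>x. x j) \<in> Rm m \<rightarrow>\<^sub>M borel" by simp
  then show "(\<lambda>x. normal_density (u j) (sg j) (x j)) \<in> borel_measurable (Rm m)"
    using borel_measurable_normal_density by (rule measurable_compose)
qed

lemma gauss_integral:
  assumes n: "n > 0" and f: "f \<in> borel_measurable (Rm m)" and B: "\<And>x. x \<in> space (Rm m) \<Longrightarrow> \<bar>f x\<bar> \<le> B"
  shows "(\<integral>y. f (\<lambda>j\<in>{..<m}. u j + y j) \<partial>gaussian_diag m (Cn_diag m lam n))
       = (\<integral>x. (\<Prod>j<m. normal_density (u j) (1 / sqrt (cc n j)) (x j)) * f x \<partial>Rm m)"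
    and "integrable (Rm m) (\<lambda>x. (\<Prod>j<m. normal_density (u j) (1 / sqrt (cc n j)) (x j)) * f x)"
proof -
  define sg where "sg j = 1 / sqrt (cc n j)" for j
  have sg: "j \<in> {..<m} \<Longrightarrow> 0 < sg j" for j using cc_pos[OF n] by (simp add: sg_def)
  define \<gamma> where "\<gamma> = PiM {..<m} (\<lambda>i. density lborel (normal_density 0 (sg i)))"
  have g: "gaussian_diag m (Cn_diag m lam n) = \<gamma>" by (simp add: gaussian_diag_def \<gamma>_def sg_def cc_def)
  have sh: "(\<lambda>y. \<lambda>j\<in>{..<m}. u j + y j) \<in> \<gamma> \<rightarrow>\<^sub>M Rm m"
    unfolding \<gamma>_def Rm_def by measurable
  have D: "distr \<gamma> (Rm m) (\<lambda>y. \<lambda>j\<in>{..<m}. u j + y j) = density (Rm m) (\<lambda>x. ennreal (\<Prod>j<m. normal_density (u j) (sg j) (x j)))"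
  proof -
    have "distr \<gamma> (Rm m) (\<lambda>y. \<lambda>j\<in>{..<m}. u j + y j) = PiM {..<m} (\<lambda>i. density lborel (normal_density (u i) (sg i)))"
      unfolding \<gamma>_def Rm_def by (rule gauss_shift) (auto simp: sg)
    also have "\<dots> = density (Rm m) (\<lambda>x. ennreal (\<Prod>j<m. normal_density (u j) (sg j) (x j)))"
      unfolding Rm_def by (rule PiM_density_prod) (auto intro: prob_space_normal_density sg)
    finally show ?thesis .
  qed
  have pm: "(\<lambda>x. \<Prod>j<m. normal_density (u j) (sg j) (x j)) \<in> borel_measurable (Rm m)"
    by (rule nd_prod_meas)
  have nn: "AE x in Rm m. 0 \<le> (\<Prod>j<m. normal_density (u j) (sg j) (x j))"
    by (intro AE_I2 prod_nonneg) auto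
  have "(\<integral>y. f (\<lambda>j\<in>{..<m}. u j + y j) \<partial>\<gamma>) = integral\<^sup>L (distr \<gamma> (Rm m) (\<lambda>y. \<lambda>j\<in>{..<m}. u j + y j)) f"
    by (rule integral_distr[OF sh f, symmetric])
  also have "\<dots> = (\<integral>x. (\<Prod>j<m. normal_density (u j) (sg j) (x j)) *\<^sub>R f x \<partial>Rm m)"
    unfolding D by (rule integral_density[OF f pm nn])
  finally show "(\<integral>y. f (\<lambda>j\<in>{..<m}. u j + y j) \<partial>gaussian_diag m (Cn_diag m lam n))
       = (\<integral>x. (\<Prod>j<m. normal_density (u j) (1 / sqrt (cc n j)) (x j)) * f x \<partial>Rm m)"
    by (simp add: g sg_def)
  have "prob_space \<gamma>" unfolding \<gamma>_def by (intro prob_space_PiM prob_space_normal_density sg)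
  then interpret \<gamma>: prob_space \<gamma> .
  have "prob_space (distr \<gamma> (Rm m) (\<lambda>y. \<lambda>j\<in>{..<m}. u j + y j))" by (rule \<gamma>.prob_space_distr[OF sh])
  then interpret Dp: prob_space "density (Rm m) (\<lambda>x. ennreal (\<Prod>j<m. normal_density (u j) (sg j) (x j)))"
    unfolding D .
  have "integrable (density (Rm m) (\<lambda>x. ennreal (\<Prod>j<m. normal_density (u j) (sg j) (x j)))) f"
    using B f by (intro Dp.integrable_const_bound[where B=B] AE_I2) auto
  then have "integrable (Rm m) (\<lambda>x. (\<Prod>j<m. normal_density (u j) (sg j) (x j)) *\<^sub>R f x)"
    by (subst integrable_density[OF f pm nn, symmetric])
  then show "integrable (Rm m) (\<lambda>x. (\<Prod>j<m. normal_density (u j) (1 / sqrt (cc n j)) (x j)) * f x)"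
    by (simp add: sg_def)
qed


lemma law_integral:
  fixes \<Omega> :: "'b measure" and \<sigma> :: "'b \<Rightarrow> nat \<Rightarrow> real" and Y :: "'b \<Rightarrow> nat \<Rightarrow> real"
  assumes n: "n \<in> admissible_sizes m p" and P: "prob_space \<Omega>"
    and sl: "distr \<Omega> (count_space (config_set n)) \<sigma> = gibbs_measure n (G n) k bc"
    and yl: "distr \<Omega> (Rm m) Y = gaussian_diag m (Cn_diag m lam n)"
    and ind: "prob_space.indep_var \<Omega> (count_space (config_set n)) \<sigma> (Rm m) Y"
    and f: "f \<in> borel_measurable (Rm m)" and B: "\<And>x. x \<in> space (Rm m) \<Longrightarrow> \<bar>f x\<bar> \<le> B"
  shows "integral\<^sup>L (distr \<Omega> (Rm m) (\<lambda>\<omega>. \<lambda>j\<in>{..<m}. U_vec m n p V (G n) (\<sigma> \<omega>) j + Y \<omega> j)) f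
           = (\<integral>x. rho n x * f x \<partial>Rm m)"
    and "integrable (Rm m) (\<lambda>x. rho n x * f x)"
    and "(\<lambda>\<omega>. \<lambda>j\<in>{..<m}. U_vec m n p V (G n) (\<sigma> \<omega>) j + Y \<omega> j) \<in> \<Omega> \<rightarrow>\<^sub>M Rm m"
proof -
  interpret \<Omega>: prob_space \<Omega> by (fact P)
  have npos: "n > 0" using adm_pos[OF n] .
  define C where "C = config_set n"
  have Cfin: "finite C" unfolding C_def by (rule config_finite)
  from ind[unfolded \<Omega>.indep_var_distribution_eq]
  have \<sigma>m: "\<sigma> \<in> \<Omega> \<rightarrow>\<^sub>M count_space C" and Ym: "Y \<in> \<Omega> \<rightarrow>\<^sub>M Rm m"
    and pr: "distr \<Omega> (count_space C) \<sigma> \<Otimes>\<^sub>M distr \<Omega> (Rm m) Y = distr \<Omega> (count_space C \<Otimes>\<^sub>M Rm m) (\<lambda>x. (\<sigma> x, Y x))"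
    unfolding C_def by auto
  define \<Phi> where "\<Phi> = (\<lambda>(s, y). \<lambda>j\<in>{..<m}. U_vec m n p V (G n) s j + (y::nat\<Rightarrow>real) j)"
  have \<Phi>m: "\<Phi> \<in> count_space C \<Otimes>\<^sub>M Rm m \<rightarrow>\<^sub>M Rm m"
  proof (rule measurable_pair_measure_countable1)
    show "countable C" using Cfin by (rule countable_finite)
    fix s assume "s \<in> C"
    show "(\<lambda>y. \<Phi> (s, y)) \<in> Rm m \<rightarrow>\<^sub>M Rm m" unfolding \<Phi>_def Rm_def by simp measurable
  qed
  have pm: "(\<lambda>\<omega>. (\<sigma> \<omega>, Y \<omega>)) \<in> \<Omega> \<rightarrow>\<^sub>M count_space C \<Otimes>\<^sub>M Rm m"
    using \<sigma>m Ym by (rule measurable_Pair)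
  show Wm: "(\<lambda>\<omega>. \<lambda>j\<in>{..<m}. U_vec m n p V (G n) (\<sigma> \<omega>) j + Y \<omega> j) \<in> \<Omega> \<rightarrow>\<^sub>M Rm m"
  proof -
    have "(\<lambda>\<omega>. \<Phi> (\<sigma> \<omega>, Y \<omega>)) \<in> \<Omega> \<rightarrow>\<^sub>M Rm m" by (rule measurable_compose[OF pm \<Phi>m])
    then show ?thesis by (simp add: \<Phi>_def)
  qed
  have f\<Phi>: "(\<lambda>z. f (\<Phi> z)) \<in> borel_measurable (count_space C \<Otimes>\<^sub>M Rm m)"
    by (rule measurable_compose[OF \<Phi>m f])
  define gib where "gib = gibbs_measure n (G n) k bc"
  define gau where "gau = gaussian_diag m (Cn_diag m lam n)"
  have gibd: "distr \<Omega> (count_space C) \<sigma> = gib" using sl by (simp add: C_def gib_def)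
  have gaud: "distr \<Omega> (Rm m) Y = gau" using yl by (simp add: gau_def)
  have pg: "prob_space gib" unfolding gibd[symmetric] by (rule \<Omega>.prob_space_distr[OF \<sigma>m])
  have pga: "prob_space gau" unfolding gaud[symmetric] by (rule \<Omega>.prob_space_distr[OF Ym])
  interpret PS: pair_sigma_finite gib gau
    by (intro pair_sigma_finite.intro prob_space_imp_sigma_finite pg pga)
  have ppr: "prob_space (gib \<Otimes>\<^sub>M gau)"
    using \<Omega>.prob_space_distr[OF pm] pr gibd gaud by simp
  interpret PP: prob_space "gib \<Otimes>\<^sub>M gau" by (fact ppr)
  have sets_eq: "sets (gib \<Otimes>\<^sub>M gau) = sets (count_space C \<Otimes>\<^sub>M Rm m)"
    using pr gibd gaud by (metis sets_distr)
  have f\<Phi>': "(\<lambda>z. f (\<Phi> z)) \<in> borel_measurable (gib \<Otimes>\<^sub>M gau)"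
    using f\<Phi> by (simp add: measurable_cong_sets[OF sets_eq refl])
  have intP: "integrable (gib \<Otimes>\<^sub>M gau) (\<lambda>z. f (\<Phi> z))"
  proof (intro PP.integrable_const_bound[where B=B] AE_I2 f\<Phi>')
    fix z assume "z \<in> space (gib \<Otimes>\<^sub>M gau)"
    then have "z \<in> space (count_space C \<Otimes>\<^sub>M Rm m)" using sets_eq_imp_space_eq[OF sets_eq] by simp
    then have "\<Phi> z \<in> space (Rm m)" using measurable_space[OF \<Phi>m] by blast
    then show "norm (f (\<Phi> z)) \<le> B" using B by simp
  qed
  have step1: "integral\<^sup>L (distr \<Omega> (Rm m) (\<lambda>\<omega>. \<lambda>j\<in>{..<m}. U_vec m n p V (G n) (\<sigma> \<omega>) j + Y \<omega> j)) f
      = integral\<^sup>L (gib \<Otimes>\<^sub>M gau) (\<lambda>z. f (\<Phi> z))"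
  proof -
    have "integral\<^sup>L (distr \<Omega> (Rm m) (\<lambda>\<omega>. \<lambda>j\<in>{..<m}. U_vec m n p V (G n) (\<sigma> \<omega>) j + Y \<omega> j)) f
        = (\<integral>\<omega>. f (\<lambda>j\<in>{..<m}. U_vec m n p V (G n) (\<sigma> \<omega>) j + Y \<omega> j) \<partial>\<Omega>)"
      by (rule integral_distr[OF Wm f])
    also have "\<dots> = (\<integral>\<omega>. f (\<Phi> (\<sigma> \<omega>, Y \<omega>)) \<partial>\<Omega>)" by (simp add: \<Phi>_def)
    also have "\<dots> = integral\<^sup>L (distr \<Omega> (count_space C \<Otimes>\<^sub>M Rm m) (\<lambda>x. (\<sigma> x, Y x))) (\<lambda>z. f (\<Phi> z))"
      by (rule integral_distr[OF pm f\<Phi>, symmetric])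
    also have "\<dots> = integral\<^sup>L (gib \<Otimes>\<^sub>M gau) (\<lambda>z. f (\<Phi> z))"
      using pr gibd gaud by simp
    finally show ?thesis .
  qed
  have step2: "integral\<^sup>L (gib \<Otimes>\<^sub>M gau) (\<lambda>z. f (\<Phi> z)) = (\<integral>s. (\<integral>y. f (\<Phi> (s, y)) \<partial>gau) \<partial>gib)"
    by (rule PS.integral_fst'[OF intP, symmetric])
  define wt where "wt s = exp (bc * interaction n (G n) k s) / (\<Sum>\<tau>\<in>config_set n. exp (bc * interaction n (G n) k \<tau>))" for s
  define Pn where "Pn s x = (\<Prod>j<m. normal_density (U_vec m n p V (G n) s j) (1 / sqrt (cc n j)) (x j))" for s x
  have gibdens: "gib = density (count_space C) (\<lambda>s. ennreal (wt s))"
    by (simp add: gib_def gibbs_measure_def C_def wt_def)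
  have inner: "(\<integral>y. f (\<Phi> (s, y)) \<partial>gau) = (\<integral>x. Pn s x * f x \<partial>Rm m)" for s
    unfolding \<Phi>_def gau_def Pn_def using gauss_integral(1)[OF npos f B] by simp
  have intPn: "integrable (Rm m) (\<lambda>x. Pn s x * f x)" for s
    unfolding Pn_def by (rule gauss_integral(2)[OF npos f B])
  have wt_nn: "0 \<le> wt s" for s unfolding wt_def by (intro divide_nonneg_nonneg sum_nonneg) auto
  have step3: "(\<integral>s. (\<integral>y. f (\<Phi> (s, y)) \<partial>gau) \<partial>gib) = (\<Sum>s\<in>C. wt s * (\<integral>x. Pn s x * f x \<partial>Rm m))"
  proof -
    have "(\<integral>s. (\<integral>y. f (\<Phi> (s, y)) \<partial>gau) \<partial>gib) = (\<integral>s. wt s *\<^sub>R (\<integral>y. f (\<Phi> (s, y)) \<partial>gau) \<partial>count_space C)"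
      unfolding gibdens by (rule integral_density) (auto simp: wt_nn)
    also have "\<dots> = (\<Sum>s\<in>C. wt s * (\<integral>x. Pn s x * f x \<partial>Rm m))"
      by (simp add: lebesgue_integral_count_space_finite[OF Cfin] inner)
    finally show ?thesis .
  qed
  have feq: "rho n x * f x = (\<Sum>s\<in>C. wt s * (Pn s x * f x))" for x
  proof -
    have "rho n x = (\<Sum>s\<in>C. wt s * Pn s x)" by (simp add: rho_def Zg_def wt_def Pn_def C_def)
    then show ?thesis by (simp add: sum_distrib_right mult.assoc)
  qed
  have step4: "(\<Sum>s\<in>C. wt s * (\<integral>x. Pn s x * f x \<partial>Rm m)) = (\<integral>x. rho n x * f x \<partial>Rm m)"
  proof -
    have "(\<Sum>s\<in>C. wt s * (\<integral>x. Pn s x * f x \<partial>Rm m)) = (\<Sum>s\<in>C. (\<integral>x. wt s * (Pn s x * f x) \<partial>Rm m))"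
      by simp
    also have "\<dots> = (\<integral>x. (\<Sum>s\<in>C. wt s * (Pn s x * f x)) \<partial>Rm m)"
    proof -
      have "(\<integral>x. (\<Sum>s\<in>C. wt s * (Pn s x * f x)) \<partial>Rm m) = (\<Sum>s\<in>C. (\<integral>x. wt s * (Pn s x * f x) \<partial>Rm m))"
        by (rule Bochner_Integration.integral_sum) (auto intro: integrable_mult_right intPn)
      then show ?thesis by simp
    qed
    also have "\<dots> = (\<integral>x. rho n x * f x \<partial>Rm m)"
      by (simp only: feq)
    finally show ?thesis .
  qed
  show "integral\<^sup>L (distr \<Omega> (Rm m) (\<lambda>\<omega>. \<lambda>j\<in>{..<m}. U_vec m n p V (G n) (\<sigma> \<omega>) j + Y \<omega> j)) f
           = (\<integral>x. rho n x * f x \<partial>Rm m)"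
    using step1 step2 step3 step4 by simp
  have "integrable (Rm m) (\<lambda>x. \<Sum>s\<in>C. wt s * (Pn s x * f x))"
    using intPn by (intro Bochner_Integration.integrable_sum integrable_mult_right) auto
  moreover have "(\<lambda>x. \<Sum>s\<in>C. wt s * (Pn s x * f x)) = (\<lambda>x. rho n x * f x)"
    by (simp only: feq)
  ultimately show "integrable (Rm m) (\<lambda>x. rho n x * f x)" by simp
qed

end

theorem proposition3p3:
  fixes m :: nat and p :: "nat \<Rightarrow> real" and k :: "nat \<Rightarrow> nat \<Rightarrow> real"
    and a :: "nat \<Rightarrow> real" and V :: "nat \<Rightarrow> nat \<Rightarrow> real" and lam :: "nat \<Rightarrow> real"
    and G :: "nat \<Rightarrow> nat \<Rightarrow> nat"
    and \<Omega> :: "nat \<Rightarrow> 'a measure" and \<sigma> :: "nat \<Rightarrow> 'a \<Rightarrow> nat \<Rightarrow> real"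
    and Y :: "nat \<Rightarrow> 'a \<Rightarrow> nat \<Rightarrow> real"
  assumes m_pos: "m \<ge> 1"
    and p_pos: "\<forall>i<m. p i > 0" and p_sum: "(\<Sum>i<m. p i) = 1"
    and k_pos: "\<forall>i<m. \<forall>j<m. k i j > 0" and k_sym: "\<forall>i<m. \<forall>j<m. k i j = k j i"
    and k_posdef: "\<forall>x. (\<exists>i<m. x i \<noteq> 0) \<longrightarrow> (\<Sum>i<m. \<Sum>j<m. x i * k i j * x j) > 0"
    and a_pos: "\<forall>i<m. a i > 0" and a_sum: "(\<Sum>i<m. a i) = 1"
    and a_eig: "\<exists>r. \<forall>j<m. (\<Sum>i<m. a i * (p i * k i j)) = r * a j"
    and V_orth: "\<forall>i<m. \<forall>j<m. (\<Sum>l<m. V i l * V j l) = (if i = j then 1 else 0)"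
    and V_decomp: "\<forall>i<m. \<forall>j<m. beta_cr m p k a * (sqrt (p i) * k i j * sqrt (p j))
                     = (\<Sum>l<m. V i l * (if l = m - 1 then 1 else lam l) * V j l)"
    and lam_bounds: "\<forall>l<m-1. 0 < lam l \<and> lam l < 1"
    and lam_mono: "\<forall>l l'. l \<le> l' \<and> l' < m - 1 \<longrightarrow> lam l \<le> lam l'"
    and G_range: "\<forall>n\<in>admissible_sizes m p. \<forall>v<n. G n v < m"
    and G_card: "\<forall>n\<in>admissible_sizes m p. \<forall>i<m.
                   real (card {v. v < n \<and> G n v = i}) = real n * p i"
    and prob: "\<forall>n\<in>admissible_sizes m p. prob_space (\<Omega> n)"
    and \<sigma>_law: "\<forall>n\<in>admissible_sizes m p.
                 distr (\<Omega> n) (count_space (config_set n)) (\<sigma> n)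
                   = gibbs_measure n (G n) k (beta_cr m p k a)"
    and Y_law: "\<forall>n\<in>admissible_sizes m p.
                 distr (\<Omega> n) (Rm m) (Y n) = gaussian_diag m (Cn_diag m lam n)"
    and indep: "\<forall>n\<in>admissible_sizes m p.
                 prob_space.indep_var (\<Omega> n) (count_space (config_set n)) (\<sigma> n) (Rm m) (Y n)"
  shows "conv_in_distribution (sequentially \<sqinter> principal (admissible_sizes m p)) m
           (\<lambda>n. distr (\<Omega> n) (Rm m)
                  (\<lambda>\<omega>. \<lambda>j\<in>{..<m}. U_vec m n p V (G n) (\<sigma> n \<omega>) j + Y n \<omega> j))
           (limit_measure m p lam V)"
proof -
  interpret C: cw m p k a V lam G
    using m_pos p_pos p_sum k_sym V_orth V_decomp lam_bounds G_range G_card by unfold_locales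
  define S where "S = admissible_sizes m p"
  define \<mu> where "\<mu> n = distr (\<Omega> n) (Rm m) (\<lambda>\<omega>. \<lambda>j\<in>{..<m}. U_vec m n p V (G n) (\<sigma> n \<omega>) j + Y n \<omega> j)" for n
  define ld where "ld = limit_density m p lam V"
  show ?thesis unfolding conv_in_distribution_def \<mu>_def[symmetric] S_def[symmetric]
  proof (intro allI impI)
    fix f :: "(nat \<Rightarrow> real) \<Rightarrow> real"
    assume fa: "continuous_on (space (Rm m)) f \<and> bounded (f ` space (Rm m))"
    have fm: "f \<in> borel_measurable (Rm m)" using fa cont_borel_Rm by blast
    obtain B where B: "\<And>x. x \<in> space (Rm m) \<Longrightarrow> \<bar>f x\<bar> \<le> B"
      using fa unfolding bounded_iff by auto
    have key: "integral\<^sup>L (\<mu> n) f = (\<integral>x. C.qq n x * f x \<partial>Rm m) / (\<integral>x. C.qq n x \<partial>Rm m)" if n: "n \<in> S" for n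
    proof -
      have nA: "n \<in> admissible_sizes m p" using n by (simp add: S_def)
      obtain \<kappa> where \<kappa>: "\<kappa> > 0" "\<And>x. C.rho n x = \<kappa> * C.qq n x" using C.rho_qq[OF nA] by blast
      have P: "prob_space (\<Omega> n)" using prob nA by blast
      have sl: "distr (\<Omega> n) (count_space (config_set n)) (\<sigma> n) = gibbs_measure n (G n) k (beta_cr m p k a)"
        using \<sigma>_law nA by blast
      have yl: "distr (\<Omega> n) (Rm m) (Y n) = gaussian_diag m (Cn_diag m lam n)" using Y_law nA by blast
      have ind: "prob_space.indep_var (\<Omega> n) (count_space (config_set n)) (\<sigma> n) (Rm m) (Y n)" using indep nA by blast
      note L = C.law_integral[OF nA P sl yl ind fm B]
      have one_m: "(\<lambda>_. 1::real) \<in> borel_measurable (Rm m)" by simp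
      note L1 = C.law_integral[OF nA P sl yl ind one_m, of 1]
      interpret Pn: prob_space "\<mu> n" unfolding \<mu>_def
        using P L(3) by (rule prob_space.prob_space_distr)
      have "1 = integral\<^sup>L (\<mu> n) (\<lambda>_. 1::real)" by (simp add: Pn.prob_space)
      also have "\<dots> = (\<integral>x. C.rho n x * 1 \<partial>Rm m)" unfolding \<mu>_def using L1(1) by simp
      also have "\<dots> = \<kappa> * (\<integral>x. C.qq n x \<partial>Rm m)" by (simp add: \<kappa>(2))
      finally have I1: "\<kappa> * (\<integral>x. C.qq n x \<partial>Rm m) = 1" by simp
      have "integral\<^sup>L (\<mu> n) f = (\<integral>x. C.rho n x * f x \<partial>Rm m)" unfolding \<mu>_def by (rule L(1))
      also have "\<dots> = \<kappa> * (\<integral>x. C.qq n x * f x \<partial>Rm m)" by (simp add: \<kappa>(2) mult.assoc)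
      moreover have "(\<integral>x. C.qq n x \<partial>Rm m) = 1 / \<kappa>" using I1 \<kappa>(1) by (simp add: eq_divide_eq mult.commute)
      ultimately show ?thesis using \<kappa>(1) by simp
    qed
    have Hdp: "0 < C.Hd x" for x by (simp add: C.Hd_def)
    have qqm: "(\<lambda>x. C.qq n x * f x) \<in> borel_measurable (Rm m)" for n
      using C.qq_meas fm by (rule borel_measurable_times)
    have ldm: "(\<lambda>x. ld x * f x) \<in> borel_measurable (Rm m)"
      unfolding ld_def using C.ld_meas fm by (rule borel_measurable_times)
    have A: "(\<lambda>n. \<integral>x. C.qq (Suc n) x * f x \<partial>Rm m) \<longlonglongrightarrow> (\<integral>x. ld x * f x \<partial>Rm m)"
    proof (rule integral_dominated_convergence[OF ldm qqm])
      show "integrable (Rm m) (\<lambda>x. C.Hd x * B)" by (intro integrable_mult_left C.Hd_integrable)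
      show "AE x in Rm m. (\<lambda>n. C.qq (Suc n) x * f x) \<longlonglongrightarrow> ld x * f x"
        unfolding ld_def by (intro AE_I2 tendsto_mult tendsto_const) (rule LIMSEQ_Suc[OF C.qq_lim])
      fix n
      show "AE x in Rm m. norm (C.qq (Suc n) x * f x) \<le> C.Hd x * B"
      proof (intro AE_I2)
        fix x assume x: "x \<in> space (Rm m)"
        have "\<bar>C.qq (Suc n) x\<bar> \<le> C.Hd x" using C.qq_le_Hd[of "Suc n" x] C.qq_pos[of "Suc n" x] by simp
        then have "\<bar>C.qq (Suc n) x\<bar> * \<bar>f x\<bar> \<le> C.Hd x * B"
          using B[OF x] Hdp[of x] by (intro mult_mono) auto
        then show "norm (C.qq (Suc n) x * f x) \<le> C.Hd x * B" by (simp add: abs_mult)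
      qed
    qed
    have Bn: "(\<lambda>n. \<integral>x. C.qq (Suc n) x \<partial>Rm m) \<longlonglongrightarrow> (\<integral>x. ld x \<partial>Rm m)"
    proof (rule integral_dominated_convergence[OF _ C.qq_meas C.Hd_integrable])
      show "ld \<in> borel_measurable (Rm m)" unfolding ld_def by (rule C.ld_meas)
      show "AE x in Rm m. (\<lambda>n. C.qq (Suc n) x) \<longlonglongrightarrow> ld x"
        unfolding ld_def by (intro AE_I2) (rule LIMSEQ_Suc[OF C.qq_lim])
      fix n
      show "AE x in Rm m. norm (C.qq (Suc n) x) \<le> C.Hd x"
      proof (intro AE_I2)
        fix x
        have "C.qq (Suc n) x \<le> C.Hd x" by (rule C.qq_le_Hd) simp
        moreover have "0 < C.qq (Suc n) x" by (rule C.qq_pos)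
        ultimately show "norm (C.qq (Suc n) x) \<le> C.Hd x" by simp
      qed
    qed
    have ldpos: "(\<integral>x. ld x \<partial>Rm m) \<noteq> 0" using C.ld_integral_pos unfolding ld_def by simp
    have R: "(\<lambda>n. (\<integral>x. C.qq (Suc n) x * f x \<partial>Rm m) / (\<integral>x. C.qq (Suc n) x \<partial>Rm m))
        \<longlonglongrightarrow> (\<integral>x. ld x * f x \<partial>Rm m) / (\<integral>x. ld x \<partial>Rm m)"
      by (rule tendsto_divide[OF A Bn ldpos])
    then have R': "(\<lambda>n. (\<integral>x. C.qq n x * f x \<partial>Rm m) / (\<integral>x. C.qq n x \<partial>Rm m))
        \<longlonglongrightarrow> (\<integral>x. ld x * f x \<partial>Rm m) / (\<integral>x. ld x \<partial>Rm m)"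
      by (rule LIMSEQ_imp_Suc)
    have RF: "((\<lambda>n. (\<integral>x. C.qq n x * f x \<partial>Rm m) / (\<integral>x. C.qq n x \<partial>Rm m))
        \<longlongrightarrow> (\<integral>x. ld x * f x \<partial>Rm m) / (\<integral>x. ld x \<partial>Rm m)) (sequentially \<sqinter> principal S)"
      by (rule tendsto_mono[OF inf_le1 R'])
    have ev: "\<forall>\<^sub>F n in sequentially \<sqinter> principal S.
        (\<integral>x. C.qq n x * f x \<partial>Rm m) / (\<integral>x. C.qq n x \<partial>Rm m) = integral\<^sup>L (\<mu> n) f"
      unfolding eventually_inf_principal using key by simp
    have lim_val: "integral\<^sup>L (limit_measure m p lam V) f = (\<integral>x. ld x * f x \<partial>Rm m) / (\<integral>x. ld x \<partial>Rm m)"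
    proof -
      have m1: "(\<lambda>x. ld x / (\<integral>y. ld y \<partial>Rm m)) \<in> borel_measurable (Rm m)"
        unfolding ld_def using C.ld_meas by simp
      have nn: "AE x in Rm m. 0 \<le> ld x / (\<integral>y. ld y \<partial>Rm m)"
        using C.ld_pos C.ld_integral_pos unfolding ld_def by (intro AE_I2 divide_nonneg_nonneg less_imp_le) auto
      have "integral\<^sup>L (limit_measure m p lam V) f = (\<integral>x. (ld x / (\<integral>y. ld y \<partial>Rm m)) *\<^sub>R f x \<partial>Rm m)"
        unfolding limit_measure_def ld_def[symmetric] by (rule integral_density[OF fm m1 nn])
      also have "\<dots> = (\<integral>x. ld x * f x / (\<integral>y. ld y \<partial>Rm m) \<partial>Rm m)" by simp
      also have "\<dots> = (\<integral>x. ld x * f x \<partial>Rm m) / (\<integral>y. ld y \<partial>Rm m)" by (rule integral_divide_zero)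
      finally show ?thesis .
    qed
    show "((\<lambda>n. integral\<^sup>L (\<mu> n) f) \<longlongrightarrow> integral\<^sup>L (limit_measure m p lam V) f) (sequentially \<sqinter> principal S)"
      unfolding lim_val by (rule Lim_transform_eventually[OF RF ev])
  qed
qed

end
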